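(* Let $s,t\geq 0$ and let $\{\varphi_n\}_{n\in\mathbb{N}}$ be a sequence of elements of $\mathcal{S}^{s}_{t}(\mathbb{R}^d)$. Then $\{\varphi_n\}$ converges in $\mathcal{S}^{s}_{t}(\mathbb{R}^d)$ if and only if $\{\varphi_n\}$ is bounded in $\mathcal{S}^{s}_{t}(\mathbb{R}^d)$ and it converges pointwise on $\mathbb{R}^d$.
   Context: For $s,t\geq 0$, the Gelfand-Shilov space $\mathcal{S}^{s}_{t}(\mathbb{R}^d)$ is the set of $\varphi\in\mathcal{S}(\mathbb{R}^d)$ for which there is $h>0$ with $p_h^{s,t}(\varphi)=\sup_{x\in\mathbb{R}^d,\alpha,\beta\in\mathbb{N}^d}\frac{h^{|\alpha+\beta|}}{\alpha!^{t}\beta!^{s}}|x^\alpha\partial^\beta\varphi(x)|<\infty$; it carries the inductive limit topology defined by these norms (as $h\to 0^+$). *)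

theory Defs
  imports "HOL-Analysis.Analysis"
begin

text \<open>Functions on R^d are modelled as maps real^'n \<Rightarrow> complex, with 'n a finite index type
  (d = CARD('n)). Multi-indices are maps 'n \<Rightarrow> nat.\<close>

type_synonym 'n mindex = "'n \<Rightarrow> nat"

definition mi_abs :: "'n::finite mindex \<Rightarrow> nat" where
  "mi_abs \<alpha> = (\<Sum>i\<in>UNIV. \<alpha> i)"

definition mi_fact :: "'n::finite mindex \<Rightarrow> real" where
  "mi_fact \<alpha> = (\<Prod>i\<in>UNIV. fact (\<alpha> i))"

definition mi_pow :: "real^'n::finite \<Rightarrow> 'n mindex \<Rightarrow> real" where
  "mi_pow x \<alpha> = (\<Prod>i\<in>UNIV. (x $ i) ^ (\<alpha> i))"

definition pder :: "'n::finite \<Rightarrow> (real^'n \<Rightarrow> complex) \<Rightarrow> (real^'n \<Rightarrow> complex)" where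
  "pder i f = (\<lambda>x. frechet_derivative f (at x) (axis i 1))"

definition idx_list :: "'n::finite list" where
  "idx_list = (SOME xs. distinct xs \<and> set xs = UNIV)"

text \<open>Higher partial derivative \<partial>^\<beta> (for smooth functions the order is irrelevant).\<close>
definition Dpart :: "'n::finite mindex \<Rightarrow> (real^'n \<Rightarrow> complex) \<Rightarrow> (real^'n \<Rightarrow> complex)" where
  "Dpart \<beta> f = foldr (\<lambda>i g. (pder i ^^ \<beta> i) g) idx_list f"

definition smooth_fun :: "(real^'n::finite \<Rightarrow> complex) \<Rightarrow> bool" where
  "smooth_fun f \<longleftrightarrow> (\<forall>\<beta> x. Dpart \<beta> f differentiable (at x))"

definition schwartz :: "(real^'n::finite \<Rightarrow> complex) set" where
  "schwartz = {f. smooth_fun f \<and>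
     (\<forall>\<alpha> \<beta>. \<exists>C. \<forall>x. norm (of_real (mi_pow x \<alpha>) * Dpart \<beta> f x) \<le> C)}"

definition GS_term :: "real \<Rightarrow> real \<Rightarrow> real \<Rightarrow> (real^'n::finite \<Rightarrow> complex)
    \<Rightarrow> real^'n \<Rightarrow> 'n mindex \<Rightarrow> 'n mindex \<Rightarrow> real" where
  "GS_term s t h \<phi> x \<alpha> \<beta> =
     h ^ (mi_abs \<alpha> + mi_abs \<beta>) / (mi_fact \<alpha> powr t * mi_fact \<beta> powr s)
       * norm (of_real (mi_pow x \<alpha>) * Dpart \<beta> \<phi> x)"

definition GS_finite :: "real \<Rightarrow> real \<Rightarrow> real \<Rightarrow> (real^'n::finite \<Rightarrow> complex) \<Rightarrow> bool" where
  "GS_finite s t h \<phi> \<longleftrightarrow> (\<exists>C. \<forall>x \<alpha> \<beta>. GS_term s t h \<phi> x \<alpha> \<beta> \<le> C)"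

text \<open>The norm p_h^{s,t} (meaningful when GS_finite s t h \<phi>).\<close>
definition GS_norm :: "real \<Rightarrow> real \<Rightarrow> real \<Rightarrow> (real^'n::finite \<Rightarrow> complex) \<Rightarrow> real" where
  "GS_norm s t h \<phi> = (SUP (x, \<alpha>, \<beta>)\<in>UNIV. GS_term s t h \<phi> x \<alpha> \<beta>)"

definition GS :: "real \<Rightarrow> real \<Rightarrow> (real^'n::finite \<Rightarrow> complex) set" where
  "GS s t = {\<phi>. \<phi> \<in> schwartz \<and> (\<exists>h>0. GS_finite s t h \<phi>)}"

text \<open>Continuous seminorms for the (locally convex) inductive limit topology:
  exactly the seminorms on S^s_t whose restriction to every step space
  {\<phi>. p_h(\<phi>) < \<infinity>} is continuous for p_h. These seminorms generate the
  inductive limit topology.\<close>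
definition GS_cont_seminorm :: "real \<Rightarrow> real \<Rightarrow> ((real^'n::finite \<Rightarrow> complex) \<Rightarrow> real) \<Rightarrow> bool" where
  "GS_cont_seminorm s t q \<longleftrightarrow>
     (\<forall>\<phi>\<in>GS s t. 0 \<le> q \<phi>) \<and>
     (\<forall>\<phi>\<in>GS s t. \<forall>\<psi>\<in>GS s t. q (\<lambda>x. \<phi> x + \<psi> x) \<le> q \<phi> + q \<psi>) \<and>
     (\<forall>\<phi>\<in>GS s t. \<forall>c::complex. q (\<lambda>x. c * \<phi> x) = norm c * q \<phi>) \<and>
     (\<forall>h>0. \<exists>C. \<forall>\<phi>\<in>GS s t. GS_finite s t h \<phi> \<longrightarrow> q \<phi> \<le> C * GS_norm s t h \<phi>)"

definition GS_converges :: "real \<Rightarrow> real \<Rightarrow> (nat \<Rightarrow> real^'n::finite \<Rightarrow> complex) \<Rightarrow> bool" where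
  "GS_converges s t \<phi>s \<longleftrightarrow>
     (\<exists>\<phi>\<in>GS s t. \<forall>q. GS_cont_seminorm s t q \<longrightarrow>
        (\<lambda>n. q (\<lambda>x. \<phi>s n x - \<phi> x)) \<longlonglongrightarrow> 0)"

definition GS_bounded :: "real \<Rightarrow> real \<Rightarrow> (nat \<Rightarrow> real^'n::finite \<Rightarrow> complex) \<Rightarrow> bool" where
  "GS_bounded s t \<phi>s \<longleftrightarrow>
     (\<forall>q. GS_cont_seminorm s t q \<longrightarrow> (\<exists>M. \<forall>n. q (\<phi>s n) \<le> M))"

end

theory Submission
  imports Defs
begin

definition inc :: "'n mindex \<Rightarrow> 'n \<Rightarrow> 'n mindex" where "inc \<gamma> j = \<gamma>(j := Suc (\<gamma> j))"

lemma pder_has_derivative: "(f has_derivative f') (at x) \<Longrightarrow> pder j f x = f' (axis j 1)"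
  unfolding pder_def using frechet_derivative_at by metis

lemma deriv_expand:
  fixes f :: "real^'n::finite \<Rightarrow> complex"
  assumes "(f has_derivative f') (at x)"
  shows "f' v = (\<Sum>j\<in>UNIV. of_real (v$j) * pder j f x)"
proof -
  have lin: "bounded_linear f'" using assms has_derivative_bounded_linear by blast
  have "f' v = f' (\<Sum>j\<in>UNIV. (v$j) *\<^sub>R axis j 1)" using basis_expansion[of v] by (simp add: scalar_mult_eq_scaleR)
  also have "\<dots> = (\<Sum>j\<in>UNIV. (v$j) *\<^sub>R f' (axis j 1))" using lin 
    by (simp add: linear_sum[OF bounded_linear.linear[OF lin]] linear_simps(5)[OF lin])
  also have "\<dots> = (\<Sum>j\<in>UNIV. of_real (v$j) * pder j f x)" using pder_has_derivative[OF assms] by (simp add: scaleR_conv_of_real)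
  finally show ?thesis .
qed

lemma funpow_pder_family:
  assumes "\<And>\<gamma> j. pder j (G \<gamma>) = G (inc \<gamma> j)"
  shows "(pder j ^^ k) (G \<gamma>) = G (\<gamma>(j := \<gamma> j + k))"
proof (induction k)
  case (Suc k)
  have "inc (\<gamma>(j := \<gamma> j + k)) j = \<gamma>(j := \<gamma> j + Suc k)" unfolding inc_def by simp
  have "(pder j ^^ Suc k) (G \<gamma>) = pder j ((pder j ^^ k) (G \<gamma>))" by simp
  also have "\<dots> = pder j (G (\<gamma>(j := \<gamma> j + k)))" using Suc by (simp only:)
  also have "\<dots> = G (inc (\<gamma>(j := \<gamma> j + k)) j)" by (rule assms)
  also have "\<dots> = G (\<gamma>(j := \<gamma> j + Suc k))" using \<open>inc _ _ = _\<close> by (simp only:)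
  finally show ?case .
qed simp

lemma foldr_family:
  assumes "\<And>\<gamma> j. pder j (G \<gamma>) = G (inc \<gamma> j)" and "distinct xs"
  shows "foldr (\<lambda>i g. (pder i ^^ \<beta> i) g) xs (G \<gamma>) = G (\<lambda>i. if i \<in> set xs then \<gamma> i + \<beta> i else \<gamma> i)"
  using assms(2)
proof (induction xs)
  case Nil
  then show ?case by simp
next
  case (Cons i ys)
  have "foldr (\<lambda>i g. (pder i ^^ \<beta> i) g) (i#ys) (G \<gamma>) = (pder i ^^ \<beta> i) (G (\<lambda>i. if i \<in> set ys then \<gamma> i + \<beta> i else \<gamma> i))"
    using Cons by simp
  also have "\<dots> = G (\<lambda>l. if l \<in> set (i#ys) then \<gamma> l + \<beta> l else \<gamma> l)"
  proof -
    define g where "g = (\<lambda>i. if i \<in> set ys then \<gamma> i + \<beta> i else \<gamma> i)"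
    have ni: "i \<notin> set ys" using Cons.prems by simp
    have "g(i := g i + \<beta> i) = (\<lambda>l. if l \<in> set (i#ys) then \<gamma> l + \<beta> l else \<gamma> l)"
    proof
      fix l show "(g(i := g i + \<beta> i)) l = (if l \<in> set (i#ys) then \<gamma> l + \<beta> l else \<gamma> l)"
        using ni unfolding g_def by (cases "l = i") auto
    qed
    then show ?thesis unfolding g_def[symmetric] funpow_pder_family[OF assms(1)] by (simp only:)
  qed
  finally show ?case .
qed

lemma idx_list: "distinct (idx_list::'n::finite list) \<and> set (idx_list::'n list) = UNIV"
proof -
  obtain xs where "set xs = (UNIV::'n set)" "distinct xs"
    using finite_distinct_list[of "UNIV::'n set"] finite_class.finite_UNIV by blast
  then have ex: "\<exists>xs::'n list. distinct xs \<and> set xs = UNIV" by blast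
  show ?thesis unfolding idx_list_def using someI_ex[OF ex] by simp
qed

lemma Dpart_family:
  assumes "\<And>\<gamma> j. pder j (G \<gamma>) = G (inc \<gamma> j)"
  shows "Dpart \<beta> (G \<gamma>) = G (\<lambda>i. \<gamma> i + \<beta> i)"
proof -
  have d: "distinct (idx_list::'n::finite list)" and u: "set (idx_list::'n list) = UNIV" using idx_list by auto
  show ?thesis unfolding Dpart_def foldr_family[OF assms d] u by simp
qed

lemma line_mvt:
  fixes F :: "real^'n::finite \<Rightarrow> complex"
  assumes der: "\<And>s. (F has_derivative F' s) (at (x + s *\<^sub>R v))"
    and bnd: "\<And>s. \<bar>s\<bar> \<le> \<bar>t\<bar> \<Longrightarrow> norm (F' s v - c) \<le> K"
  shows "norm (F (x + t *\<^sub>R v) - F x - t *\<^sub>R c) \<le> K * \<bar>t\<bar>"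
proof -
  define g where "g s = F (x + s *\<^sub>R v) - s *\<^sub>R c" for s :: real
  have gd: "(g has_derivative (\<lambda>u. u *\<^sub>R (F' s v - c))) (at s within S)" for s S
  proof -
    have lin: "bounded_linear (F' s)" using der has_derivative_bounded_linear by blast
    have "((F \<circ> (\<lambda>s. x + s *\<^sub>R v)) has_derivative (F' s \<circ> (\<lambda>u. u *\<^sub>R v))) (at s within S)"
      by (rule diff_chain_within[of "\<lambda>s. x + s *\<^sub>R v" _ s S F "F' s", OF _ has_derivative_at_withinI[OF der]]) (auto intro!: derivative_eq_intros)
    then have "((\<lambda>s. F (x + s *\<^sub>R v)) has_derivative (\<lambda>u. u *\<^sub>R F' s v)) (at s within S)"
      by (simp add: o_def linear_simps(5)[OF lin])
    then show ?thesis unfolding g_def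
      by (auto intro!: derivative_eq_intros simp: scaleR_diff_right)
  qed
  have "norm (g t - g 0) \<le> K * norm (t - 0)"
  proof (rule differentiable_bound[where S="{-\<bar>t\<bar>..\<bar>t\<bar>}"])
    show "convex {-\<bar>t\<bar>..\<bar>t\<bar>}" by simp
    show "(g has_derivative (\<lambda>u. u *\<^sub>R (F' s v - c))) (at s within {-\<bar>t\<bar>..\<bar>t\<bar>})" for s by (rule gd)
    show "onorm (\<lambda>u. u *\<^sub>R (F' s v - c)) \<le> K" if "s \<in> {-\<bar>t\<bar>..\<bar>t\<bar>}" for s
    proof -
      have "\<bar>s\<bar> \<le> \<bar>t\<bar>" using that by auto
      then show ?thesis using bnd[of s] onorm_scaleR_left[OF bounded_linear_ident, of "F' s v - c"]
        by (simp add: onorm_id)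
    qed
  qed auto
  then show ?thesis by (simp add: g_def diff_diff_eq2 diff_diff_add add.commute)
qed

lemma fd_works: "(\<And>y. f differentiable (at y)) \<Longrightarrow> (f has_derivative frechet_derivative f (at y)) (at y)"
  using frechet_derivative_works by blast

lemma grp1: "(a::'a::ab_group_add) - b - c = (a - p - u) - (b - p - w) + (u - w - c)"
  by (simp add: algebra_simps)

lemma grp2: "((A::'a::ab_group_add) - B) - (C - D) - E = A - B - C + D - E"
  by (simp add: algebra_simps)

lemma schwarz_half:
  fixes f :: "real^'n::finite \<Rightarrow> complex"
  assumes df: "\<And>y. f differentiable (at y)" and di: "pder i f differentiable (at x)" and e: "e > 0"
  shows "\<exists>d>0. \<forall>h. \<bar>h\<bar> < d \<longrightarrow> norm (f (x + h *\<^sub>R axis i 1 + h *\<^sub>R axis j 1) - f (x + h *\<^sub>R axis i 1)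
      - f (x + h *\<^sub>R axis j 1) + f x - (h*h) *\<^sub>R pder j (pder i f) x) \<le> 3*e*(h*h)"
proof -
  define P where "P = pder i f"
  define A where "A = frechet_derivative P (at x)"
  have PA: "(P has_derivative A) (at x)" using di unfolding P_def A_def by (simp add: frechet_derivative_works)
  then obtain d where d: "d>0" "\<forall>y. norm (y - x) < d \<longrightarrow> norm (P y - P x - A (y - x)) \<le> e * norm (y - x)"
    using e unfolding has_derivative_at_alt by blast
  have linA: "bounded_linear A" using PA has_derivative_bounded_linear by blast
  have a: "A (axis j 1) = pder j P x" using pder_has_derivative[OF PA] by simp
  have fd: "\<And>y. (f has_derivative frechet_derivative f (at y)) (at y)" using fd_works[OF df] .
  show ?thesis
  proof (intro exI[of _ "d/2"] conjI allI impI)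
    show "d/2 > 0" using d by simp
    fix h :: real assume h: "\<bar>h\<bar> < d/2"
    define F where "F y = f (y + h *\<^sub>R axis j 1) - f y" for y
    define F' where "F' s = (\<lambda>w. frechet_derivative f (at (x + s *\<^sub>R axis i 1 + h *\<^sub>R axis j 1)) w
       - frechet_derivative f (at (x + s *\<^sub>R axis i 1)) w)" for s
    have Fd: "(F has_derivative F' s) (at (x + s *\<^sub>R axis i 1))" for s
    proof -
      have "((f \<circ> (\<lambda>y. y + h *\<^sub>R axis j 1)) has_derivative (frechet_derivative f (at (x + s *\<^sub>R axis i 1 + h *\<^sub>R axis j 1)) \<circ> (\<lambda>y. y))) (at (x + s *\<^sub>R axis i 1))"
        by (rule diff_chain_at[OF _ fd]) (auto intro!: derivative_eq_intros)
      then have "((\<lambda>y. f (y + h *\<^sub>R axis j 1)) has_derivative (frechet_derivative f (at (x + s *\<^sub>R axis i 1 + h *\<^sub>R axis j 1)))) (at (x + s *\<^sub>R axis i 1))"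
        by (simp add: o_def)
      then show ?thesis unfolding F_def F'_def
        by (intro has_derivative_diff fd)
    qed
    have bnd: "norm (F' s (axis i 1) - h *\<^sub>R pder j P x) \<le> 3 * e * \<bar>h\<bar>" if s: "\<bar>s\<bar> \<le> \<bar>h\<bar>" for s
    proof -
      define y1 where "y1 = x + s *\<^sub>R axis i 1 + h *\<^sub>R axis j 1"
      define y2 where "y2 = x + s *\<^sub>R axis i 1"
      have n1: "norm (y1 - x) \<le> 2 * \<bar>h\<bar>"
      proof -
        have "norm (y1 - x) = norm (s *\<^sub>R axis i (1::real) + h *\<^sub>R axis j (1::real))" unfolding y1_def by simp
        also have "\<dots> \<le> norm (s *\<^sub>R axis i (1::real)) + norm (h *\<^sub>R axis j (1::real))" by (rule norm_triangle_ineq)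
        also have "\<dots> = \<bar>s\<bar> + \<bar>h\<bar>" by simp
        finally have "norm (y1 - x) \<le> \<bar>s\<bar> + \<bar>h\<bar>" .
        then show ?thesis using s by simp
      qed
      have n2: "norm (y2 - x) = \<bar>s\<bar>" unfolding y2_def by simp
      have r1: "norm (P y1 - P x - A (y1 - x)) \<le> e * norm (y1 - x)" 
      proof -
        have "norm (y1 - x) < d" using n1 h by linarith
        then show ?thesis using d(2) by blast
      qed
      have r2: "norm (P y2 - P x - A (y2 - x)) \<le> e * norm (y2 - x)" 
      proof -
        have "norm (y2 - x) < d" using n2 h s by linarith
        then show ?thesis using d(2) by blast
      qed
      have lin: "A (y1 - x) - A (y2 - x) = h *\<^sub>R pder j P x"
        unfolding y1_def y2_def a[symmetric] using linA
        by (simp add: linear_simps)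
      have eq: "F' s (axis i 1) - h *\<^sub>R pder j P x = (P y1 - P x - A (y1 - x)) - (P y2 - P x - A (y2 - x))"
      proof -
        have "F' s (axis i 1) = P y1 - P y2" by (simp add: F'_def P_def pder_def y1_def y2_def)
        then show ?thesis using grp1[of "P y1" "P y2" "h *\<^sub>R pder j P x" "P x" "A (y1 - x)" "A (y2 - x)"] lin by simp
      qed
      have "norm (F' s (axis i 1) - h *\<^sub>R pder j P x) \<le> e * norm (y1 - x) + e * norm (y2 - x)"
        unfolding eq using r1 r2 norm_triangle_ineq4[of "P y1 - P x - A (y1 - x)" "P y2 - P x - A (y2 - x)"] by linarith
      also have "\<dots> \<le> e * (2 * \<bar>h\<bar>) + e * \<bar>h\<bar>"
        using n1 n2 s e by (intro add_mono mult_left_mono) auto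
      finally show ?thesis by simp
    qed
    have "norm (F (x + h *\<^sub>R axis i 1) - F x - h *\<^sub>R (h *\<^sub>R pder j P x)) \<le> (3 * e * \<bar>h\<bar>) * \<bar>h\<bar>"
      by (rule line_mvt[OF Fd bnd]) simp
    then show "norm (f (x + h *\<^sub>R axis i 1 + h *\<^sub>R axis j 1) - f (x + h *\<^sub>R axis i 1)
      - f (x + h *\<^sub>R axis j 1) + f x - (h*h) *\<^sub>R pder j (pder i f) x) \<le> 3*e*(h*h)"
      unfolding F_def P_def grp2 by (simp add: abs_mult_self)
  qed
qed

lemma schwarz:
  fixes f :: "real^'n::finite \<Rightarrow> complex"
  assumes df: "\<And>y. f differentiable (at y)"
    and di: "\<And>y. pder i f differentiable (at y)"
    and dj: "\<And>y. pder j f differentiable (at y)"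
  shows "pder j (pder i f) x = pder i (pder j f) x"
proof -
  let ?a = "pder j (pder i f) x" and ?b = "pder i (pder j f) x"
  have key: "norm (?a - ?b) \<le> 6 * e" if e: "e > 0" for e
  proof -
    obtain d1 where d1: "d1 > 0" "\<forall>h. \<bar>h\<bar> < d1 \<longrightarrow> norm (f (x + h *\<^sub>R axis i 1 + h *\<^sub>R axis j 1) - f (x + h *\<^sub>R axis i 1)
      - f (x + h *\<^sub>R axis j 1) + f x - (h*h) *\<^sub>R ?a) \<le> 3*e*(h*h)"
      using schwarz_half[OF df di e, of x j] by blast
    obtain d2 where d2: "d2 > 0" "\<forall>h. \<bar>h\<bar> < d2 \<longrightarrow> norm (f (x + h *\<^sub>R axis j 1 + h *\<^sub>R axis i 1) - f (x + h *\<^sub>R axis j 1)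
      - f (x + h *\<^sub>R axis i 1) + f x - (h*h) *\<^sub>R ?b) \<le> 3*e*(h*h)"
      using schwarz_half[OF df dj e, of x i] by blast
    define h where "h = min d1 d2 / 2"
    have hp: "h > 0" "\<bar>h\<bar> < d1" "\<bar>h\<bar> < d2" using d1 d2 unfolding h_def by auto
    define D where "D = f (x + h *\<^sub>R axis i 1 + h *\<^sub>R axis j 1) - f (x + h *\<^sub>R axis i 1) - f (x + h *\<^sub>R axis j 1) + f x"
    have D2: "f (x + h *\<^sub>R axis j 1 + h *\<^sub>R axis i 1) - f (x + h *\<^sub>R axis j 1) - f (x + h *\<^sub>R axis i 1) + f x = D"
    proof -
      have "x + h *\<^sub>R axis j 1 + h *\<^sub>R axis i 1 = x + h *\<^sub>R axis i 1 + h *\<^sub>R axis j (1::real)" by (simp add: add_ac)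
      then show ?thesis unfolding D_def by (simp add: add_ac)
    qed
    have A1: "norm (D - (h*h) *\<^sub>R ?a) \<le> 3*e*(h*h)" using d1(2)[rule_format, OF hp(2)] unfolding D_def .
    have A2: "norm (D - (h*h) *\<^sub>R ?b) \<le> 3*e*(h*h)" using d2(2)[rule_format, OF hp(3)] D2 by simp
    have eqd: "(h*h) *\<^sub>R (?a - ?b) = (D - (h*h) *\<^sub>R ?b) - (D - (h*h) *\<^sub>R ?a)" by (simp add: scaleR_diff_right)
    have "norm ((h*h) *\<^sub>R (?a - ?b)) \<le> norm (D - (h*h) *\<^sub>R ?b) + norm (D - (h*h) *\<^sub>R ?a)"
      unfolding eqd by (rule norm_triangle_ineq4)
    also have "\<dots> \<le> (h*h) * (6*e)" using A1 A2 by (simp add: algebra_simps)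
    finally have "(h*h) * norm (?a - ?b) \<le> (h*h) * (6*e)" using hp by simp
    then show ?thesis using hp by (simp add: mult_le_cancel_left_pos)
  qed
  show ?thesis
  proof (rule ccontr)
    assume "?a \<noteq> ?b"
    then have "norm (?a - ?b) > 0" by simp
    then have "norm (?a - ?b) \<le> 6 * (norm (?a - ?b) / 12)" using key[of "norm (?a - ?b) / 12"] by simp
    then show False using \<open>norm (?a - ?b) > 0\<close> by simp
  qed
qed

definition Lf :: "'n::finite list \<Rightarrow> 'n mindex \<Rightarrow> (real^'n \<Rightarrow> complex) \<Rightarrow> (real^'n \<Rightarrow> complex)" where
  "Lf xs \<gamma> \<psi> = foldr (\<lambda>i g. (pder i ^^ \<gamma> i) g) xs \<psi>"

lemma foldr_id_list: "foldr (\<lambda>i g. g) us g = g"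
  by (induction us) auto

lemma Lf_Dpart:
  assumes "idx_list = us @ xs"
  shows "Lf xs \<gamma> \<psi> = Dpart (\<lambda>i. if i \<in> set xs then \<gamma> i else 0) \<psi>"
proof -
  have dis: "set us \<inter> set xs = {}" using idx_list assms by (metis distinct_append)
  let ?r = "\<lambda>i. if i \<in> set xs then \<gamma> i else 0"
  have "Dpart ?r \<psi> = foldr (\<lambda>i g. (pder i ^^ ?r i) g) us (foldr (\<lambda>i g. (pder i ^^ ?r i) g) xs \<psi>)"
    unfolding Dpart_def assms by simp
  also have "foldr (\<lambda>i g. (pder i ^^ ?r i) g) xs \<psi> = Lf xs \<gamma> \<psi>"
    unfolding Lf_def by (rule foldr_cong) auto
  also have "foldr (\<lambda>i g. (pder i ^^ ?r i) g) us (Lf xs \<gamma> \<psi>) = foldr (\<lambda>i g. g) us (Lf xs \<gamma> \<psi>)"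
    by (rule foldr_cong) (use dis in auto)
  finally show ?thesis by (simp add: foldr_id_list)
qed

lemma Lf_diff:
  assumes "smooth_fun \<psi>" "idx_list = us @ xs"
  shows "Lf xs \<gamma> \<psi> differentiable (at y)"
  using assms unfolding Lf_Dpart[OF assms(2)] smooth_fun_def by blast

lemma Lf_Cons: "Lf (i#ys) \<delta> \<psi> = (pder i ^^ \<delta> i) (Lf ys \<delta> \<psi>)"
  unfolding Lf_def by simp

lemma Lf_upd: "i \<notin> set ys \<Longrightarrow> Lf ys (\<delta>(i := k)) \<psi> = Lf ys \<delta> \<psi>"
  unfolding Lf_def by (rule foldr_cong) auto

lemma Lf_Cons_upd: "i \<notin> set ys \<Longrightarrow> (pder i ^^ k) (Lf ys \<delta> \<psi>) = Lf (i#ys) (\<delta>(i := k)) \<psi>"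
  by (simp add: Lf_Cons Lf_upd)

lemma commute_Lf:
  assumes sm: "smooth_fun \<psi>"
  shows "idx_list = us @ xs \<Longrightarrow> j \<in> set xs \<Longrightarrow> pder j (Lf xs \<gamma> \<psi>) = Lf xs (inc \<gamma> j) \<psi>"
proof (induction xs arbitrary: us \<gamma> j)
  case Nil
  then show ?case by simp
next
  case (Cons i ys)
  have us': "idx_list = (us @ [i]) @ ys" using Cons.prems by simp
  have ni: "i \<notin> set ys" using idx_list Cons.prems(1) by (metis distinct.simps(2) distinct_append)
  note IH = Cons.IH[OF us']
  show ?case
  proof (cases "j = i")
    case True
    have "pder j (Lf (i#ys) \<gamma> \<psi>) = (pder i ^^ Suc (\<gamma> i)) (Lf ys \<gamma> \<psi>)"
      using True by (simp add: Lf_Cons)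
    also have "\<dots> = Lf (i#ys) (inc \<gamma> j) \<psi>"
      using True ni by (simp add: Lf_Cons inc_def Lf_upd)
    finally show ?thesis .
  next
    case False
    then have jys: "j \<in> set ys" using Cons.prems by simp
    have inner: "pder j ((pder i ^^ k) (Lf ys \<gamma>' \<psi>)) = (pder i ^^ k) (Lf ys (inc \<gamma>' j) \<psi>)" for k \<gamma>'
    proof (induction k)
      case 0
      then show ?case using IH[OF jys] by simp
    next
      case (Suc k)
      define X where "X = (pder i ^^ k) (Lf ys \<gamma>' \<psi>)"
      have dX: "X differentiable (at y)" for y
        unfolding X_def Lf_Cons_upd[OF ni] by (rule Lf_diff[OF sm Cons.prems(1)])
      have diX: "pder i X differentiable (at y)" for y
      proof -
        have "pder i X = (pder i ^^ Suc k) (Lf ys \<gamma>' \<psi>)" unfolding X_def by simp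
        then show ?thesis unfolding Lf_Cons_upd[OF ni] using Lf_diff[OF sm Cons.prems(1)] by simp
      qed
      have djX: "pder j X differentiable (at y)" for y
        unfolding X_def Suc.IH unfolding Lf_Cons_upd[OF ni] by (rule Lf_diff[OF sm Cons.prems(1)])
      have "pder j ((pder i ^^ Suc k) (Lf ys \<gamma>' \<psi>)) = pder j (pder i X)" unfolding X_def by simp
      also have "\<dots> = pder i (pder j X)"
        using schwarz[OF dX diX djX] by (intro ext) 
      also have "\<dots> = (pder i ^^ Suc k) (Lf ys (inc \<gamma>' j) \<psi>)" unfolding X_def Suc.IH by simp
      finally show ?case .
    qed
    have "pder j (Lf (i#ys) \<gamma> \<psi>) = (pder i ^^ \<gamma> i) (Lf ys (inc \<gamma> j) \<psi>)"
      unfolding Lf_Cons inner ..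
    also have "\<dots> = Lf (i#ys) (inc \<gamma> j) \<psi>"
      using False by (simp add: Lf_Cons inc_def)
    finally show ?thesis .
  qed
qed

lemma Dpart_commute:
  assumes "smooth_fun \<psi>"
  shows "pder j (Dpart \<gamma> \<psi>) = Dpart (inc \<gamma> j) \<psi>"
proof -
  have "j \<in> set idx_list" using idx_list by auto
  then have "pder j (Lf idx_list \<gamma> \<psi>) = Lf idx_list (inc \<gamma> j) \<psi>" by (intro commute_Lf[OF assms, of "[]"]) simp_all
  then show ?thesis by (simp add: Lf_def Dpart_def)
qed

lemma Dpart_has_derivative:
  assumes "smooth_fun \<psi>"
  shows "(Dpart \<gamma> \<psi> has_derivative (\<lambda>v. \<Sum>j\<in>UNIV. of_real (v$j) * Dpart (inc \<gamma> j) \<psi> x)) (at x)"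
proof -
  have d: "(Dpart \<gamma> \<psi> has_derivative frechet_derivative (Dpart \<gamma> \<psi>) (at x)) (at x)"
    using assms unfolding smooth_fun_def using frechet_derivative_works by blast
  have "frechet_derivative (Dpart \<gamma> \<psi>) (at x) = (\<lambda>v. \<Sum>j\<in>UNIV. of_real (v$j) * Dpart (inc \<gamma> j) \<psi> x)"
    using deriv_expand[OF d] Dpart_commute[OF assms] by (intro ext) simp
  with d show ?thesis by simp
qed

lemma Dpart_zero: "Dpart (\<lambda>_. 0) f = f"
proof -
  have "foldr (\<lambda>i. id) xs f = f" for xs :: "'a list" by (induction xs) auto
  then show ?thesis unfolding Dpart_def by simp
qed

lemma sum_axis: "(\<Sum>k\<in>UNIV. of_real ((axis j (1::real)) $ k) * c k) = (c j :: complex)"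
proof -
  have "(\<Sum>k\<in>UNIV. of_real ((axis j (1::real)) $ k) * c k) = (\<Sum>k\<in>UNIV. if k = j then c k else 0)"
    by (intro sum.cong) (auto simp: axis_def)
  then show ?thesis by simp
qed

lemma Dpart_lincomb:
  assumes f: "smooth_fun f" and g: "smooth_fun g"
  shows "Dpart \<beta> (\<lambda>x. a * f x + b * g x) = (\<lambda>x. a * Dpart \<beta> f x + b * Dpart \<beta> g x)"
    and "smooth_fun (\<lambda>x. a * f x + b * g x)"
proof -
  define G where "G \<gamma> = (\<lambda>x. a * Dpart \<gamma> f x + b * Dpart \<gamma> g x)" for \<gamma>
  have Gd: "(G \<gamma> has_derivative (\<lambda>v. a * (\<Sum>j\<in>UNIV. of_real (v$j) * Dpart (inc \<gamma> j) f x)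
      + b * (\<Sum>j\<in>UNIV. of_real (v$j) * Dpart (inc \<gamma> j) g x))) (at x)" for \<gamma> x
    unfolding G_def
    by (intro has_derivative_add has_derivative_mult_right Dpart_has_derivative f g)
  have GG: "pder j (G \<gamma>) = G (inc \<gamma> j)" for \<gamma> j
  proof
    fix x
    show "pder j (G \<gamma>) x = G (inc \<gamma> j) x"
      unfolding pder_has_derivative[OF Gd] sum_axis by (simp add: G_def)
  qed
  have G0: "G (\<lambda>_. 0) = (\<lambda>x. a * f x + b * g x)" unfolding G_def Dpart_zero ..
  have DG: "Dpart \<beta>' (G (\<lambda>_. 0)) = G \<beta>'" for \<beta>' using Dpart_family[OF GG, of \<beta>' "\<lambda>_. 0"] by simp
  then show "Dpart \<beta> (\<lambda>x. a * f x + b * g x) = (\<lambda>x. a * Dpart \<beta> f x + b * Dpart \<beta> g x)"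
    unfolding G0 G_def .
  show "smooth_fun (\<lambda>x. a * f x + b * g x)"
    unfolding smooth_fun_def
  proof (intro allI)
    fix \<beta>' x show "Dpart \<beta>' (\<lambda>x. a * f x + b * g x) differentiable at x"
      unfolding DG[unfolded G0] differentiable_def using Gd[of \<beta>' x] by blast
  qed
qed

lemma mi_fact_ge1: "mi_fact \<alpha> \<ge> 1"
  unfolding mi_fact_def by (rule prod_ge_1) simp

lemma W_pos: "mi_fact \<alpha> powr t * mi_fact \<beta> powr s > 0"
  using mi_fact_ge1[of \<alpha>] mi_fact_ge1[of \<beta>] by simp

lemma mi_zero[simp]: "mi_abs (\<lambda>_. 0) = 0" "mi_fact (\<lambda>_. 0) = 1" "mi_pow x (\<lambda>_. 0) = 1"
  unfolding mi_abs_def mi_fact_def mi_pow_def by simp_all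

lemma GS_term_alt: "GS_term s t h \<phi> x \<alpha> \<beta> =
   h ^ (mi_abs \<alpha> + mi_abs \<beta>) / (mi_fact \<alpha> powr t * mi_fact \<beta> powr s) * (\<bar>mi_pow x \<alpha>\<bar> * norm (Dpart \<beta> \<phi> x))"
  unfolding GS_term_def by (simp add: norm_mult)

lemma GS_term_nonneg: "h \<ge> 0 \<Longrightarrow> GS_term s t h \<phi> x \<alpha> \<beta> \<ge> 0"
  unfolding GS_term_alt using W_pos[of \<alpha> t \<beta> s] by (intro mult_nonneg_nonneg divide_nonneg_pos) auto

lemma GS_term_00: "GS_term s t h \<phi> x (\<lambda>_. 0) (\<lambda>_. 0) = norm (\<phi> x)"
  unfolding GS_term_alt by (simp add: Dpart_zero)

lemma GS_term_scale_h:
  assumes "h > 0" "h' > 0"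
  shows "GS_term s t h' \<phi> x \<alpha> \<beta> \<le> (max 1 (h'/h)) ^ (mi_abs \<alpha> + mi_abs \<beta>) * GS_term s t h \<phi> x \<alpha> \<beta>"
proof -
  let ?m = "mi_abs \<alpha> + mi_abs \<beta>"
  have "h' ^ ?m = (h'/h) ^ ?m * h ^ ?m" using assms by (simp add: power_divide)
  also have "\<dots> \<le> (max 1 (h'/h)) ^ ?m * h ^ ?m"
    using assms by (intro mult_right_mono power_mono) auto
  finally have hm: "h' ^ ?m \<le> (max 1 (h'/h)) ^ ?m * h ^ ?m" .
  define R where "R = (\<bar>mi_pow x \<alpha>\<bar> * norm (Dpart \<beta> \<phi> x)) / (mi_fact \<alpha> powr t * mi_fact \<beta> powr s)"
  have R: "R \<ge> 0" unfolding R_def using W_pos[of \<alpha> t \<beta> s] by simp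
  have "GS_term s t h' \<phi> x \<alpha> \<beta> = h' ^ ?m * R" unfolding GS_term_alt R_def by simp
  also have "\<dots> \<le> (max 1 (h'/h)) ^ ?m * h ^ ?m * R" using hm R by (rule mult_right_mono)
  also have "\<dots> = (max 1 (h'/h)) ^ ?m * GS_term s t h \<phi> x \<alpha> \<beta>" unfolding GS_term_alt R_def by simp
  finally show ?thesis .
qed

lemma GS_term_mono_h:
  assumes "0 < h'" "h' \<le> h"
  shows "GS_term s t h' \<phi> x \<alpha> \<beta> \<le> GS_term s t h \<phi> x \<alpha> \<beta>"
  using GS_term_scale_h[of h h' s t \<phi> x \<alpha> \<beta>] assms by simp

lemma GS_finite_mono:
  assumes "0 < h'" "h' \<le> h" "GS_finite s t h \<phi>"
  shows "GS_finite s t h' \<phi>"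
  using assms GS_term_mono_h unfolding GS_finite_def by (meson order_trans)

lemma GS_bdd: "GS_finite s t h \<phi> \<Longrightarrow> bdd_above ((\<lambda>(x, \<alpha>, \<beta>). GS_term s t h \<phi> x \<alpha> \<beta>) ` UNIV)"
  unfolding GS_finite_def bdd_above_def by auto

lemma GS_term_le_norm:
  assumes "GS_finite s t h \<phi>"
  shows "GS_term s t h \<phi> x \<alpha> \<beta> \<le> GS_norm s t h \<phi>"
  unfolding GS_norm_def
  using cSUP_upper[OF UNIV_I GS_bdd[OF assms], of "(x, \<alpha>, \<beta>)"] by simp

lemma GS_norm_le:
  assumes "\<And>x \<alpha> \<beta>. GS_term s t h \<phi> x \<alpha> \<beta> \<le> C"
  shows "GS_norm s t h \<phi> \<le> C"
  unfolding GS_norm_def by (rule cSUP_least) (auto simp: assms)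

lemma GS_smooth: "\<phi> \<in> GS s t \<Longrightarrow> smooth_fun \<phi>"
  unfolding GS_def schwartz_def by auto

lemma Dpart_scale:
  assumes "smooth_fun f"
  shows "Dpart \<beta> (\<lambda>x. c * f x) = (\<lambda>x. c * Dpart \<beta> f x)" and "smooth_fun (\<lambda>x. c * f x)"
  using Dpart_lincomb(1)[OF assms assms, where \<beta>=\<beta> and a=c and b=0] Dpart_lincomb(2)[OF assms assms, where a=c and b=0] by simp_all

lemma Dpart_add:
  assumes "smooth_fun f" "smooth_fun g"
  shows "Dpart \<beta> (\<lambda>x. f x + g x) = (\<lambda>x. Dpart \<beta> f x + Dpart \<beta> g x)" and "smooth_fun (\<lambda>x. f x + g x)"
  using Dpart_lincomb(1)[OF assms, where \<beta>=\<beta> and a=1 and b=1] Dpart_lincomb(2)[OF assms, where a=1 and b=1] by simp_all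

lemma Dpart_diff:
  assumes "smooth_fun f" "smooth_fun g"
  shows "Dpart \<beta> (\<lambda>x. f x - g x) = (\<lambda>x. Dpart \<beta> f x - Dpart \<beta> g x)" and "smooth_fun (\<lambda>x. f x - g x)"
  using Dpart_lincomb(1)[OF assms, where \<beta>=\<beta> and a=1 and b="-1"] Dpart_lincomb(2)[OF assms, where a=1 and b="-1"] by simp_all

lemma GS_term_scale:
  assumes "smooth_fun f"
  shows "GS_term s t h (\<lambda>x. c * f x) x \<alpha> \<beta> = norm c * GS_term s t h f x \<alpha> \<beta>"
  unfolding GS_term_alt Dpart_scale[OF assms] by (simp add: norm_mult)

lemma GS_term_add:
  assumes "smooth_fun f" "smooth_fun g" "h \<ge> 0"
  shows "GS_term s t h (\<lambda>x. f x + g x) x \<alpha> \<beta> \<le> GS_term s t h f x \<alpha> \<beta> + GS_term s t h g x \<alpha> \<beta>"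
proof -
  define w where "w = h ^ (mi_abs \<alpha> + mi_abs \<beta>) / (mi_fact \<alpha> powr t * mi_fact \<beta> powr s) * \<bar>mi_pow x \<alpha>\<bar>"
  have w: "w \<ge> 0" unfolding w_def using W_pos[of \<alpha> t \<beta> s] assms(3) by simp
  have "GS_term s t h (\<lambda>x. f x + g x) x \<alpha> \<beta> = w * norm (Dpart \<beta> f x + Dpart \<beta> g x)"
    unfolding GS_term_alt Dpart_add[OF assms(1,2)] w_def by simp
  also have "\<dots> \<le> w * (norm (Dpart \<beta> f x) + norm (Dpart \<beta> g x))"
    using w norm_triangle_ineq by (rule mult_left_mono[rotated])
  also have "\<dots> = GS_term s t h f x \<alpha> \<beta> + GS_term s t h g x \<alpha> \<beta>"
    unfolding GS_term_alt w_def by (simp only: distrib_left mult.assoc)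
  finally show ?thesis .
qed

lemma GS_term_diff:
  assumes "smooth_fun f" "smooth_fun g" "h \<ge> 0"
  shows "GS_term s t h (\<lambda>x. f x - g x) x \<alpha> \<beta> \<le> GS_term s t h f x \<alpha> \<beta> + GS_term s t h g x \<alpha> \<beta>"
proof -
  have "(\<lambda>x. f x - g x) = (\<lambda>x. f x + (-1) * g x)" by simp
  moreover have "GS_term s t h (\<lambda>x. (-1) * g x) x \<alpha> \<beta> = GS_term s t h g x \<alpha> \<beta>"
    using GS_term_scale[OF assms(2), where c="-1"] by simp
  ultimately show ?thesis using GS_term_add[OF assms(1) Dpart_scale(2)[OF assms(2), where c="-1"] assms(3)]
    by (metis (no_types, lifting))
qed

lemma GS_schwartz_bound:
  assumes "GS_finite s t h \<phi>" "h > 0"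
  shows "\<exists>C. \<forall>x. norm (of_real (mi_pow x \<alpha>) * Dpart \<beta> \<phi> x) \<le> C"
proof -
  obtain C where C: "\<And>x. GS_term s t h \<phi> x \<alpha> \<beta> \<le> C" using assms unfolding GS_finite_def by blast
  define w where "w = h ^ (mi_abs \<alpha> + mi_abs \<beta>) / (mi_fact \<alpha> powr t * mi_fact \<beta> powr s)"
  have w: "w > 0" unfolding w_def using W_pos[of \<alpha> t \<beta> s] assms by simp
  have "norm (of_real (mi_pow x \<alpha>) * Dpart \<beta> \<phi> x) \<le> C / w" for x
    using C[of x] w unfolding GS_term_def w_def[symmetric] by (simp add: field_simps)
  then show ?thesis by blast
qed

lemma GS_I:
  assumes "smooth_fun \<phi>" "h > 0" "GS_finite s t h \<phi>"
  shows "\<phi> \<in> GS s t"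
  unfolding GS_def schwartz_def using assms GS_schwartz_bound[OF assms(3,2)] by blast

lemma GS_add:
  assumes "f \<in> GS s t" "g \<in> GS s t"
  shows "(\<lambda>x. f x + g x) \<in> GS s t"
proof -
  obtain h1 where h1: "h1 > 0" "GS_finite s t h1 f" using assms unfolding GS_def by auto
  obtain h2 where h2: "h2 > 0" "GS_finite s t h2 g" using assms unfolding GS_def by auto
  define h where "h = min h1 h2"
  have hp: "h > 0" using h1 h2 h_def by simp
  obtain C1 where C1: "\<And>x \<alpha> \<beta>. GS_term s t h f x \<alpha> \<beta> \<le> C1"
    using GS_finite_mono[OF hp _ h1(2)] unfolding GS_finite_def h_def by auto
  obtain C2 where C2: "\<And>x \<alpha> \<beta>. GS_term s t h g x \<alpha> \<beta> \<le> C2"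
    using GS_finite_mono[OF hp _ h2(2)] unfolding GS_finite_def h_def by auto
  have sf: "smooth_fun f" "smooth_fun g" using assms GS_smooth by auto
  have "GS_finite s t h (\<lambda>x. f x + g x)"
    unfolding GS_finite_def
    using GS_term_add[OF sf less_imp_le[OF hp]] C1 C2 by (meson add_mono order_trans)
  then show ?thesis using GS_I[OF Dpart_add(2)[OF sf] hp] by simp
qed

lemma GS_scale:
  assumes "f \<in> GS s t"
  shows "(\<lambda>x. c * f x) \<in> GS s t"
proof -
  obtain h where h: "h > 0" "GS_finite s t h f" using assms unfolding GS_def by auto
  obtain C where C: "\<And>x \<alpha> \<beta>. GS_term s t h f x \<alpha> \<beta> \<le> C" using h unfolding GS_finite_def by auto
  have sf: "smooth_fun f" using assms GS_smooth by auto
  have "GS_finite s t h (\<lambda>x. c * f x)"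
    unfolding GS_finite_def GS_term_scale[OF sf]
    using C by (meson mult_left_mono norm_ge_zero)
  then show ?thesis using GS_I[OF Dpart_scale(2)[OF sf] h(1)] by simp
qed

lemma GS_diff:
  assumes "f \<in> GS s t" "g \<in> GS s t"
  shows "(\<lambda>x. f x - g x) \<in> GS s t"
  using GS_add[OF assms(1) GS_scale[OF assms(2), of "-1"]] by simp

lemma forward:
  fixes \<psi>s :: "nat \<Rightarrow> real^'n::finite \<Rightarrow> complex"
  assumes \<psi>: "\<And>n. \<psi>s n \<in> GS s t" and conv: "GS_converges s t \<psi>s"
  shows "GS_bounded s t \<psi>s \<and> (\<forall>x. convergent (\<lambda>n. \<psi>s n x))"
proof -
  obtain \<phi> where \<phi>: "\<phi> \<in> GS s t" and lim: "\<And>q. GS_cont_seminorm s t q \<Longrightarrow> (\<lambda>n. q (\<lambda>x. \<psi>s n x - \<phi> x)) \<longlonglongrightarrow> 0"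
    using conv unfolding GS_converges_def by blast
  have pt: "convergent (\<lambda>n. \<psi>s n x)" for x
  proof -
    have cs: "GS_cont_seminorm s t (\<lambda>\<theta>::real^'n \<Rightarrow> complex. norm (\<theta> x))"
      unfolding GS_cont_seminorm_def
    proof (intro conjI ballI allI impI)
      fix h :: real assume h: "h > 0"
      have "\<forall>\<phi>\<in>GS s t. GS_finite s t h \<phi> \<longrightarrow> norm (\<phi> x) \<le> 1 * GS_norm s t h \<phi>"
        using GS_term_le_norm GS_term_00 by (metis mult_1)
      then show "\<exists>C. \<forall>\<phi>\<in>GS s t. GS_finite s t h \<phi> \<longrightarrow> norm (\<phi> x) \<le> C * GS_norm s t h \<phi>" by blast
    qed (auto simp: norm_mult norm_triangle_ineq)
    then have "(\<lambda>n. norm (\<psi>s n x - \<phi> x)) \<longlonglongrightarrow> 0" using lim by force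
    then have "(\<lambda>n. \<psi>s n x) \<longlonglongrightarrow> \<phi> x" by (simp add: tendsto_norm_zero_iff LIM_zero_iff)
    then show ?thesis by (rule convergentI)
  qed
  have bd: "GS_bounded s t \<psi>s"
    unfolding GS_bounded_def
  proof (intro allI impI)
    fix q :: "(real^'n \<Rightarrow> complex) \<Rightarrow> real" assume q: "GS_cont_seminorm s t q"
    have "(\<lambda>n. q (\<lambda>x. \<psi>s n x - \<phi> x)) \<longlonglongrightarrow> 0" using lim q by blast
    then have "Bseq (\<lambda>n. q (\<lambda>x. \<psi>s n x - \<phi> x))" by (intro convergent_imp_Bseq convergentI)
    then obtain K where K: "\<forall>n. norm (q (\<lambda>x. \<psi>s n x - \<phi> x)) \<le> K" by (meson BseqE)
    have "q (\<psi>s n) \<le> K + q \<phi>" for n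
    proof -
      have d: "(\<lambda>x. \<psi>s n x - \<phi> x) \<in> GS s t" by (rule GS_diff[OF \<psi> \<phi>])
      have "q (\<psi>s n) = q (\<lambda>x. (\<lambda>x. \<psi>s n x - \<phi> x) x + \<phi> x)" by simp
      also have "\<dots> \<le> q (\<lambda>x. \<psi>s n x - \<phi> x) + q \<phi>"
      proof -
        have tri: "\<forall>\<phi>\<in>GS s t. \<forall>\<psi>\<in>GS s t. q (\<lambda>x. \<phi> x + \<psi> x) \<le> q \<phi> + q \<psi>" using q unfolding GS_cont_seminorm_def by blast
        show ?thesis by (rule tri[rule_format, OF d \<phi>])
      qed
      also have "\<dots> \<le> K + q \<phi>" using K[rule_format, of n] by simp
      finally show ?thesis .
    qed
    then show "\<exists>M. \<forall>n. q (\<psi>s n) \<le> M" by blast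
  qed
  show ?thesis using bd pt by blast
qed

lemma SUP_scale:
  fixes f :: "nat \<Rightarrow> real"
  assumes "c \<ge> 0" "bdd_above (range f)"
  shows "(SUP k. c * f k) = c * (SUP k. f k)"
proof (rule antisym)
  show "(SUP k. c * f k) \<le> c * (SUP k. f k)"
    by (rule cSUP_least) (auto intro!: mult_left_mono cSUP_upper assms)
  have bc: "bdd_above (range (\<lambda>k. c * f k))"
    using assms by (auto intro!: bdd_aboveI2[where M="c * (SUP k. f k)"] mult_left_mono cSUP_upper)
  show "c * (SUP k. f k) \<le> (SUP k. c * f k)"
  proof (cases "c = 0")
    case True then show ?thesis by simp
  next
    case False
    then have cp: "c > 0" using assms by simp
    have "(SUP k. f k) \<le> (SUP k. c * f k) / c"
    proof (rule cSUP_least)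
      fix k
      have "c * f k \<le> (SUP k. c * f k)" by (rule cSUP_upper[OF UNIV_I bc])
      then show "f k \<le> (SUP k. c * f k) / c" using cp by (simp add: field_simps)
    qed simp
    then show ?thesis using cp by (simp add: field_simps)
  qed
qed

lemma regular:
  fixes \<psi>s :: "nat \<Rightarrow> real^'n::finite \<Rightarrow> complex"
  assumes \<psi>: "\<And>n. \<psi>s n \<in> GS s t" and bd: "GS_bounded s t \<psi>s"
  shows "\<exists>h>0. \<exists>M. \<forall>n x \<alpha> \<beta>. GS_term s t h (\<psi>s n) x \<alpha> \<beta> \<le> M"
proof (rule ccontr)
  assume H: "\<not> ?thesis"
  define hk where "hk k = 1 / real (Suc k)" for k
  have hkp: "hk k > 0" for k unfolding hk_def by simp
  have "\<forall>k. \<exists>p. GS_term s t (hk k) (\<psi>s (fst p)) (fst (snd p)) (fst (snd (snd p))) (snd (snd (snd p))) > real k"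
  proof
    fix k
    from H hkp[of k] have "\<not> (\<forall>n x \<alpha> \<beta>. GS_term s t (hk k) (\<psi>s n) x \<alpha> \<beta> \<le> real k)" by blast
    then obtain n x \<alpha> \<beta> where "GS_term s t (hk k) (\<psi>s n) x \<alpha> \<beta> > real k" by (meson not_le)
    then show "\<exists>p. GS_term s t (hk k) (\<psi>s (fst p)) (fst (snd p)) (fst (snd (snd p))) (snd (snd (snd p))) > real k"
      by (intro exI[of _ "(n, x, \<alpha>, \<beta>)"]) simp
  qed
  then obtain P where P: "\<And>k. GS_term s t (hk k) (\<psi>s (fst (P k))) (fst (snd (P k))) (fst (snd (snd (P k)))) (snd (snd (snd (P k)))) > real k"
    by metis
  define N where "N k = fst (P k)" for k
  define X where "X k = fst (snd (P k))" for k
  define A where "A k = fst (snd (snd (P k)))" for k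
  define B where "B k = snd (snd (snd (P k)))" for k
  define T where "T k (\<theta>::real^'n \<Rightarrow> complex) = GS_term s t (hk k) \<theta> (X k) (A k) (B k)" for k \<theta>
  have TP: "T k (\<psi>s (N k)) > real k" for k using P[of k] unfolding T_def N_def X_def A_def B_def .
  have Tnn: "T k \<theta> \<ge> 0" for k and \<theta> :: "real^'n \<Rightarrow> complex" unfolding T_def using GS_term_nonneg hkp less_imp_le by blast
  have Tb: "\<exists>C. \<forall>\<theta>::real^'n \<Rightarrow> complex. GS_finite s t h \<theta> \<longrightarrow> (\<forall>k. T k \<theta> \<le> C * GS_norm s t h \<theta>)" if h: "h > 0" for h
  proof -
    define K where "K = nat \<lceil>1/h\<rceil>"
    define m where "m k = mi_abs (A k) + mi_abs (B k)" for k
    define C where "C = 1 + (\<Sum>k<K. (max 1 (1/h)) ^ m k)"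
    have fac: "(max 1 (hk k / h)) ^ m k \<le> C" for k
    proof (cases "k < K")
      case True
      have "hk k \<le> 1" unfolding hk_def by simp
      then have "hk k / h \<le> 1 / h" using h by (simp add: divide_right_mono)
      then have "(max 1 (hk k / h)) ^ m k \<le> (max 1 (1/h)) ^ m k" by (intro power_mono) auto
      also have "\<dots> \<le> (\<Sum>k<K. (max 1 (1/h)) ^ m k)"
        using True by (intro member_le_sum) auto
      finally show ?thesis unfolding C_def by simp
    next
      case False
      have "real K \<ge> 1/h" unfolding K_def by linarith
      then have "real (Suc k) > 1/h" using False by simp
      then have "hk k < h" unfolding hk_def using h by (simp add: field_simps)
      then have "max 1 (hk k / h) = 1" using h by simp
      moreover have "0 \<le> (\<Sum>k<K. (max 1 (1/h)) ^ m k)" by (intro sum_nonneg) auto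
      ultimately show ?thesis unfolding C_def by simp
    qed
    show ?thesis
    proof (intro exI allI impI)
      fix \<theta> :: "real^'n \<Rightarrow> complex" and k assume fin: "GS_finite s t h \<theta>"
      have nn: "GS_norm s t h \<theta> \<ge> 0"
        using GS_term_le_norm[OF fin] GS_term_nonneg[of h] h by (meson less_imp_le order_trans)
      have "T k \<theta> \<le> (max 1 (hk k / h)) ^ m k * GS_term s t h \<theta> (X k) (A k) (B k)"
        unfolding T_def m_def by (rule GS_term_scale_h[OF h hkp])
      also have "\<dots> \<le> (max 1 (hk k / h)) ^ m k * GS_norm s t h \<theta>"
        by (intro mult_left_mono GS_term_le_norm[OF fin]) auto
      also have "\<dots> \<le> C * GS_norm s t h \<theta>" by (intro mult_right_mono fac nn)
      finally show "T k \<theta> \<le> C * GS_norm s t h \<theta>" .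
    qed
  qed
  have bddT: "bdd_above (range (\<lambda>k. T k \<theta>))" if thG: "\<theta> \<in> GS s t" for \<theta> :: "real^'n \<Rightarrow> complex"
  proof -
    obtain h where h: "h > 0" "GS_finite s t h \<theta>" using thG unfolding GS_def by auto
    obtain C where "\<forall>k. T k \<theta> \<le> C * GS_norm s t h \<theta>" using Tb[OF h(1)] h(2) by blast
    then show ?thesis by (intro bdd_aboveI2) blast
  qed
  define q where "q (\<theta>::real^'n \<Rightarrow> complex) = (SUP k. T k \<theta>)" for \<theta>
  have Tq: "T k \<theta> \<le> q \<theta>" if "\<theta> \<in> GS s t" for k and \<theta> :: "real^'n \<Rightarrow> complex"
    unfolding q_def by (rule cSUP_upper[OF UNIV_I bddT[OF that]])
  have cs: "GS_cont_seminorm s t q"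
    unfolding GS_cont_seminorm_def
  proof (intro conjI ballI allI impI)
    fix \<theta> :: "real^'n \<Rightarrow> complex" assume "\<theta> \<in> GS s t"
    then show "0 \<le> q \<theta>" using Tq[of \<theta> 0] Tnn[of 0 \<theta>] by linarith
  next
    fix \<theta> \<zeta> :: "real^'n \<Rightarrow> complex" assume th: "\<theta> \<in> GS s t" and ch: "\<zeta> \<in> GS s t"
    show "q (\<lambda>x. \<theta> x + \<zeta> x) \<le> q \<theta> + q \<zeta>"
      unfolding q_def[of "\<lambda>x. \<theta> x + \<zeta> x"]
    proof (rule cSUP_least)
      fix k
      have "T k (\<lambda>x. \<theta> x + \<zeta> x) \<le> T k \<theta> + T k \<zeta>"
        unfolding T_def using GS_term_add[OF GS_smooth[OF th] GS_smooth[OF ch]] hkp less_imp_le by blast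
      then show "T k (\<lambda>x. \<theta> x + \<zeta> x) \<le> q \<theta> + q \<zeta>" using Tq[OF th, of k] Tq[OF ch, of k] by linarith
    qed simp
  next
    fix \<theta> :: "real^'n \<Rightarrow> complex" and c :: complex assume th: "\<theta> \<in> GS s t"
    have "T k (\<lambda>x. c * \<theta> x) = norm c * T k \<theta>" for k
      unfolding T_def by (rule GS_term_scale[OF GS_smooth[OF th]])
    then show "q (\<lambda>x. c * \<theta> x) = norm c * q \<theta>"
      unfolding q_def using SUP_scale[OF norm_ge_zero bddT[OF th]] by simp
  next
    fix h :: real assume h: "h > 0"
    obtain C where C: "\<forall>\<theta>::real^'n \<Rightarrow> complex. GS_finite s t h \<theta> \<longrightarrow> (\<forall>k. T k \<theta> \<le> C * GS_norm s t h \<theta>)" using Tb[OF h] by blast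
    show "\<exists>C. \<forall>\<theta>\<in>GS s t. GS_finite s t h \<theta> \<longrightarrow> q \<theta> \<le> C * GS_norm s t h \<theta>"
    proof (intro exI ballI impI)
      fix \<theta> :: "real^'n \<Rightarrow> complex" assume "\<theta> \<in> GS s t" "GS_finite s t h \<theta>"
      then show "q \<theta> \<le> C * GS_norm s t h \<theta>" unfolding q_def using C by (intro cSUP_least) auto
    qed
  qed
  then obtain M where M: "\<And>n. q (\<psi>s n) \<le> M" using bd unfolding GS_bounded_def by blast
  define k where "k = nat \<lceil>M\<rceil> + 1"
  have "real k > M" unfolding k_def by linarith
  moreover have "T k (\<psi>s (N k)) \<le> M" using Tq[OF \<psi>, of k "N k"] M[of "N k"] by linarith
  ultimately show False using TP[of k] by linarith
qed

definition wt :: "real \<Rightarrow> real \<Rightarrow> real \<Rightarrow> 'n::finite mindex \<Rightarrow> 'n mindex \<Rightarrow> real" where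
  "wt s t h \<alpha> \<beta> = h ^ (mi_abs \<alpha> + mi_abs \<beta>) / (mi_fact \<alpha> powr t * mi_fact \<beta> powr s)"

lemma wt_pos: "h > 0 \<Longrightarrow> wt s t h \<alpha> \<beta> > 0"
  unfolding wt_def using W_pos[of \<alpha> t \<beta> s] by simp

lemma GS_term_wt: "GS_term s t h \<phi> x \<alpha> \<beta> = wt s t h \<alpha> \<beta> * (\<bar>mi_pow x \<alpha>\<bar> * norm (Dpart \<beta> \<phi> x))"
  unfolding GS_term_alt wt_def ..

lemma GS_term_bound:
  assumes "GS_term s t h \<phi> x \<alpha> \<beta> \<le> M" "h > 0"
  shows "\<bar>mi_pow x \<alpha>\<bar> * norm (Dpart \<beta> \<phi> x) \<le> M / wt s t h \<alpha> \<beta>"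
  using assms wt_pos[OF assms(2), of s t \<alpha> \<beta>] unfolding GS_term_wt by (simp add: field_simps)

lemma mi_pow_upd2: "mi_pow x (\<alpha>(i := \<alpha> i + 2)) = mi_pow x \<alpha> * (x$i)^2"
proof -
  have "mi_pow x (\<alpha>(i := \<alpha> i + 2)) = (\<Prod>k\<in>UNIV. (x$k)^(\<alpha> k) * (if k = i then (x$k)^2 else 1))"
    unfolding mi_pow_def by (intro prod.cong) (auto simp: power_add power2_eq_square)
  also have "\<dots> = mi_pow x \<alpha> * (x$i)^2"
    unfolding mi_pow_def prod.distrib by (simp add: prod.delta)
  finally show ?thesis .
qed

lemma mi_abs_inc: "mi_abs (inc \<gamma> j) = Suc (mi_abs \<gamma>)"
proof -
  have "mi_abs (inc \<gamma> j) = (\<Sum>k\<in>UNIV. \<gamma> k + (if k = j then 1 else 0))"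
    unfolding mi_abs_def inc_def by (intro sum.cong) auto
  also have "\<dots> = Suc (mi_abs \<gamma>)" unfolding sum.distrib mi_abs_def by simp
  finally show ?thesis .
qed

lemma mi_pow_box:
  assumes "\<And>i. \<bar>x$i\<bar> \<le> R"
  shows "\<bar>mi_pow x \<alpha>\<bar> \<le> R ^ mi_abs \<alpha>"
proof -
  have "\<bar>mi_pow x \<alpha>\<bar> = (\<Prod>k\<in>UNIV. \<bar>x$k\<bar>^(\<alpha> k))" unfolding mi_pow_def by (simp add: abs_prod power_abs)
  also have "\<dots> \<le> (\<Prod>k\<in>UNIV. R^(\<alpha> k))" by (intro prod_mono conjI power_mono assms) auto
  also have "\<dots> = R ^ mi_abs \<alpha>" unfolding mi_abs_def power_sum ..
  finally show ?thesis .
qed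

lemma Dpart_deriv_line:
  assumes "smooth_fun \<psi>"
  shows "(Dpart \<gamma> \<psi> has_derivative (\<lambda>v. \<Sum>j\<in>UNIV. of_real (v$j) * Dpart (inc \<gamma> j) \<psi> y)) (at y)"
    and "(\<lambda>v. \<Sum>k\<in>UNIV. of_real (v$k) * Dpart (inc \<gamma> k) \<psi> y) (axis j 1) = Dpart (inc \<gamma> j) \<psi> y"
  using Dpart_has_derivative[OF assms] sum_axis by auto

lemma line_lip:
  assumes sm: "smooth_fun \<psi>" and B: "\<And>y. norm (Dpart (inc \<gamma> j) \<psi> y) \<le> B"
  shows "norm (Dpart \<gamma> \<psi> (x + t *\<^sub>R axis j 1) - Dpart \<gamma> \<psi> x) \<le> B * \<bar>t\<bar>"
proof -
  have "norm (Dpart \<gamma> \<psi> (x + t *\<^sub>R axis j 1) - Dpart \<gamma> \<psi> x - t *\<^sub>R 0) \<le> B * \<bar>t\<bar>"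
    by (rule line_mvt[OF Dpart_deriv_line(1)[OF sm]]) (simp add: sum_axis B)
  then show ?thesis by simp
qed

lemma taylor_line:
  assumes sm: "smooth_fun \<psi>" and B: "\<And>y. norm (Dpart (inc (inc \<gamma> j) j) \<psi> y) \<le> B"
  shows "norm (Dpart \<gamma> \<psi> (x + t *\<^sub>R axis j 1) - Dpart \<gamma> \<psi> x - t *\<^sub>R Dpart (inc \<gamma> j) \<psi> x) \<le> (B * \<bar>t\<bar>) * \<bar>t\<bar>"
proof (rule line_mvt[OF Dpart_deriv_line(1)[OF sm]])
  fix s :: real assume s: "\<bar>s\<bar> \<le> \<bar>t\<bar>"
  have "norm (Dpart (inc \<gamma> j) \<psi> (x + s *\<^sub>R axis j 1) - Dpart (inc \<gamma> j) \<psi> x) \<le> B * \<bar>s\<bar>"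
    by (rule line_lip[OF sm B])
  also have "\<dots> \<le> B * \<bar>t\<bar>"
  proof -
    have "B \<ge> 0" using B[of x] norm_ge_zero order_trans by blast
    then show ?thesis using s by (intro mult_left_mono) auto
  qed
  finally show "norm ((\<lambda>v. \<Sum>k\<in>UNIV. of_real (v$k) * Dpart (inc \<gamma> k) \<psi> (x + s *\<^sub>R axis j 1)) (axis j 1) - Dpart (inc \<gamma> j) \<psi> x) \<le> B * \<bar>t\<bar>"
    by (simp add: sum_axis)
qed

lemma global_lip:
  assumes sm: "smooth_fun \<psi>" and B: "\<And>j y. norm (Dpart (inc (\<lambda>_. 0) j) \<psi> y) \<le> B j"
  shows "norm (\<psi> x - \<psi> y) \<le> (\<Sum>j\<in>UNIV. B j) * norm (x - y)"
proof -
  have d: "(\<psi> has_derivative (\<lambda>v. \<Sum>j\<in>UNIV. of_real (v$j) * Dpart (inc (\<lambda>_. 0) j) \<psi> z)) (at z within UNIV)" for z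
    using Dpart_has_derivative[OF sm, of "\<lambda>_. 0" z] by (simp add: Dpart_zero)
  show ?thesis
  proof (rule differentiable_bound[OF convex_UNIV d])
    fix z :: "real^'a"
    show "onorm (\<lambda>v. \<Sum>j\<in>UNIV. of_real (v$j) * Dpart (inc (\<lambda>_. 0) j) \<psi> z) \<le> (\<Sum>j\<in>UNIV. B j)"
    proof (rule onorm_le)
      fix v :: "real^'a"
      have "norm (\<Sum>j\<in>UNIV. of_real (v$j) * Dpart (inc (\<lambda>_. 0) j) \<psi> z) \<le> (\<Sum>j\<in>UNIV. norm (of_real (v$j) * Dpart (inc (\<lambda>_. 0) j) \<psi> z))"
        by (rule norm_sum)
      also have "\<dots> \<le> (\<Sum>j\<in>UNIV. norm v * B j)"
      proof (intro sum_mono)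
        fix j
        have "norm (of_real (v$j) * Dpart (inc (\<lambda>_. 0) j) \<psi> z) = \<bar>v$j\<bar> * norm (Dpart (inc (\<lambda>_. 0) j) \<psi> z)"
          by (simp add: norm_mult)
        also have "\<dots> \<le> norm v * B j" by (intro mult_mono component_le_norm_cart B) auto
        finally show "norm (of_real (v$j) * Dpart (inc (\<lambda>_. 0) j) \<psi> z) \<le> norm v * B j" .
      qed
      also have "\<dots> = (\<Sum>j\<in>UNIV. B j) * norm v" by (simp add: sum_distrib_left mult.commute)
      finally show "norm (\<Sum>j\<in>UNIV. of_real (v$j) * Dpart (inc (\<lambda>_. 0) j) \<psi> z) \<le> (\<Sum>j\<in>UNIV. B j) * norm v" .
    qed
  qed auto
qed

lemma tri3: "norm ((a::'a::real_normed_vector) - d) \<le> norm (a - b) + norm (b - c) + norm (c - d)"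
proof -
  have e: "a - d = ((a - b) + (b - c)) + (c - d)" by simp
  show ?thesis unfolding e using norm_triangle_ineq[of "(a-b)+(b-c)" "c-d"] norm_triangle_ineq[of "a-b" "b-c"] by linarith
qed

locale GSset =
  fixes s t :: real and \<psi>s :: "nat \<Rightarrow> real^'n::finite \<Rightarrow> complex" and h0 M :: real
  assumes \<psi>: "\<And>n. \<psi>s n \<in> GS s t" and h0: "h0 > 0"
    and HB: "\<And>n x \<alpha> \<beta>. GS_term s t h0 (\<psi>s n) x \<alpha> \<beta> \<le> M"
    and pc: "\<And>x. convergent (\<lambda>n. \<psi>s n x)"
begin

lemma sm: "smooth_fun (\<psi>s n)" using \<psi> GS_smooth by blast

lemma M_nn: "M \<ge> 0"
  using HB[of 0 0 "\<lambda>_. 0" "\<lambda>_. 0"] GS_term_nonneg[of h0] h0 by (meson less_imp_le order_trans)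

definition Kb :: "'n mindex \<Rightarrow> 'n mindex \<Rightarrow> real" where "Kb \<alpha> \<beta> = M / wt s t h0 \<alpha> \<beta>"

lemma Kb_nn: "Kb \<alpha> \<beta> \<ge> 0" unfolding Kb_def using M_nn wt_pos[OF h0, of s t \<alpha> \<beta>] by simp

lemma bnd: "\<bar>mi_pow x \<alpha>\<bar> * norm (Dpart \<beta> (\<psi>s n) x) \<le> Kb \<alpha> \<beta>"
  unfolding Kb_def by (rule GS_term_bound[OF HB h0])

lemma bnd0: "norm (Dpart \<beta> (\<psi>s n) x) \<le> Kb (\<lambda>_. 0) \<beta>"
  using bnd[of x "\<lambda>_. 0"] by simp

lemma mi_pow_e2: "mi_pow x ((\<lambda>_. 0)(i := 2)) = (x$i)^2"
proof -
  have "(\<Prod>k\<in>UNIV. (x$k)^(((\<lambda>_. 0)(i := 2)) k)) = (\<Prod>k\<in>UNIV. if k = i then (x$k)^2 else 1)"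
    by (intro prod.cong) auto
  then show ?thesis unfolding mi_pow_def by simp
qed

lemma decay: "(x$i)^2 * norm (Dpart \<beta> (\<psi>s n) x) \<le> Kb ((\<lambda>_. 0)(i := 2)) \<beta>"
  using bnd[of x "(\<lambda>_. 0)(i := 2)"] unfolding mi_pow_e2 by simp

definition UC :: "'n mindex \<Rightarrow> bool" where
  "UC \<gamma> \<longleftrightarrow> (\<forall>\<epsilon>>0. \<exists>N. \<forall>m\<ge>N. \<forall>n\<ge>N. \<forall>x. norm (Dpart \<gamma> (\<psi>s m) x - Dpart \<gamma> (\<psi>s n) x) \<le> \<epsilon>)"

lemma UC0: "UC (\<lambda>_. 0)"
  unfolding UC_def
proof (intro allI impI)
  fix \<epsilon> :: real assume e: "\<epsilon> > 0"
  define Kd where "Kd = (\<Sum>i\<in>UNIV. Kb ((\<lambda>_. 0)(i := 2)) (\<lambda>_. 0))"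
  have Kd_nn: "Kd \<ge> 0" unfolding Kd_def by (intro sum_nonneg Kb_nn)
  define R where "R = max 1 (3 * Kd / \<epsilon>)"
  have R1: "R \<ge> 1" unfolding R_def by simp
  have far: "norm (\<psi>s n x) \<le> \<epsilon>/3" if xi: "\<bar>x$i\<bar> \<ge> R" for n x i
  proof -
    have b: "R * R \<le> \<bar>x$i\<bar> * \<bar>x$i\<bar>" using xi R1 by (intro mult_mono) auto
    have a: "R * 1 \<le> R * R" using R1 by (intro mult_left_mono) auto
    have c: "(x$i)^2 = \<bar>x$i\<bar> * \<bar>x$i\<bar>" by (metis power2_abs power2_eq_square)
    have sq: "(x$i)^2 \<ge> R" using a b c by linarith
    have "(x$i)^2 * norm (\<psi>s n x) \<le> Kb ((\<lambda>_. 0)(i := 2)) (\<lambda>_. 0)"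
      using decay[of x i "\<lambda>_. 0" n] by (simp add: Dpart_zero)
    also have "\<dots> \<le> Kd" unfolding Kd_def by (rule member_le_sum) (auto intro: Kb_nn)
    also have "\<dots> \<le> (\<epsilon>/3) * (x$i)^2"
    proof -
      have "3 * Kd / \<epsilon> \<le> (x$i)^2" using sq unfolding R_def by simp
      then show ?thesis using e by (simp add: field_simps)
    qed
    finally have "(x$i)^2 * norm (\<psi>s n x) \<le> (x$i)^2 * (\<epsilon>/3)" by (simp add: mult.commute)
    moreover have "(x$i)^2 > 0" using sq R1 by linarith
    ultimately show ?thesis by simp
  qed
  define L where "L = (\<Sum>j\<in>UNIV. Kb (\<lambda>_. 0) (inc (\<lambda>_. 0) j))"
  have L_nn: "L \<ge> 0" unfolding L_def by (intro sum_nonneg Kb_nn)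
  have lip: "norm (\<psi>s n x - \<psi>s n y) \<le> L * norm (x - y)" for n x y
    unfolding L_def by (rule global_lip[OF sm bnd0])
  define \<delta> where "\<delta> = \<epsilon> / (3 * (L + 1))"
  have dp: "\<delta> > 0" unfolding \<delta>_def using e L_nn by simp
  have Ld: "L * \<delta> \<le> \<epsilon>/3" unfolding \<delta>_def using e L_nn by (simp add: field_simps)
  define S where "S = cbox (\<chi> i. - R) (\<chi> i. R :: real^'n)"
  have "compact S" unfolding S_def by simp
  then obtain k where k: "finite k" "S \<subseteq> (\<Union>c\<in>k. ball c \<delta>)"
    using dp unfolding compact_eq_totally_bounded by blast
  have "\<forall>c. \<exists>N. \<forall>m\<ge>N. \<forall>n\<ge>N. norm (\<psi>s m c - \<psi>s n c) < \<epsilon>/3"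
    using e by (intro allI CauchyD convergent_Cauchy pc) simp
  then obtain Nf where Nf: "\<And>c m n. m \<ge> Nf c \<Longrightarrow> n \<ge> Nf c \<Longrightarrow> norm (\<psi>s m c - \<psi>s n c) < \<epsilon>/3" by metis
  define N where "N = (\<Sum>c\<in>k. Nf c)"
  have NN: "Nf c \<le> N" if "c \<in> k" for c unfolding N_def by (rule member_le_sum[OF that]) (auto simp: k(1))
  show "\<exists>N. \<forall>m\<ge>N. \<forall>n\<ge>N. \<forall>x. norm (Dpart (\<lambda>_. 0) (\<psi>s m) x - Dpart (\<lambda>_. 0) (\<psi>s n) x) \<le> \<epsilon>"
  proof (intro exI allI impI)
    fix m n x assume m: "m \<ge> N" and n: "n \<ge> N"
    show "norm (Dpart (\<lambda>_. 0) (\<psi>s m) x - Dpart (\<lambda>_. 0) (\<psi>s n) x) \<le> \<epsilon>"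
    proof (cases "\<exists>i. \<bar>x$i\<bar> \<ge> R")
      case True
      then obtain i where i: "\<bar>x$i\<bar> \<ge> R" by blast
      have "norm (\<psi>s m x - \<psi>s n x) \<le> norm (\<psi>s m x) + norm (\<psi>s n x)" by (rule norm_triangle_ineq4)
      also have "\<dots> \<le> \<epsilon>/3 + \<epsilon>/3" using far[OF i, of m] far[OF i, of n] by simp
      finally show ?thesis using e by (simp add: Dpart_zero)
    next
      case False
      have "- R \<le> x$i \<and> x$i \<le> R" for i
      proof -
        have "\<bar>x$i\<bar> < R" using False by (simp add: not_le)
        then show ?thesis by (simp add: abs_less_iff)
      qed
      then have "x \<in> S" unfolding S_def mem_box_cart by simp
      then obtain c where c: "c \<in> k" "x \<in> ball c \<delta>" using k by blast
      have dc: "norm (x - c) < \<delta>" using c(2) by (simp add: dist_norm norm_minus_commute)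
      have "norm (\<psi>s m x - \<psi>s n x) \<le> norm (\<psi>s m x - \<psi>s m c) + norm (\<psi>s m c - \<psi>s n c) + norm (\<psi>s n c - \<psi>s n x)"
        by (rule tri3)
      also have "\<dots> \<le> L * \<delta> + \<epsilon>/3 + L * \<delta>"
      proof -
        have "norm (\<psi>s m x - \<psi>s m c) \<le> L * \<delta>" using lip[of m x c] dc L_nn
          by (meson less_imp_le mult_left_mono order_trans)
        moreover have "norm (\<psi>s n c - \<psi>s n x) \<le> L * \<delta>" using lip[of n c x] dc L_nn
          by (metis less_imp_le mult_left_mono order_trans norm_minus_commute)
        moreover have "norm (\<psi>s m c - \<psi>s n c) \<le> \<epsilon>/3" using Nf[of c m n] NN[OF c(1)] m n by simp
        ultimately show ?thesis by simp
      qed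
      also have "\<dots> \<le> \<epsilon>" using Ld by simp
      finally show ?thesis by (simp add: Dpart_zero)
    qed
  qed
qed

end

context GSset begin

lemma UC_step:
  assumes "UC \<gamma>"
  shows "UC (inc \<gamma> j)"
  unfolding UC_def
proof (intro allI impI)
  fix \<epsilon> :: real assume e: "\<epsilon> > 0"
  define B where "B = Kb (\<lambda>_. 0) (inc (inc \<gamma> j) j)"
  have B: "\<And>n y. norm (Dpart (inc (inc \<gamma> j) j) (\<psi>s n) y) \<le> B" unfolding B_def by (rule bnd0)
  have Bnn: "B \<ge> 0" unfolding B_def by (rule Kb_nn)
  define \<delta> where "\<delta> = \<epsilon> / (4 * (B + 1))"
  have dp: "\<delta> > 0" unfolding \<delta>_def using e Bnn by simp
  have Bd: "2 * B * \<delta> \<le> \<epsilon> / 2" unfolding \<delta>_def using e Bnn by (simp add: field_simps)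
  obtain N where N: "\<And>m n x. m \<ge> N \<Longrightarrow> n \<ge> N \<Longrightarrow> norm (Dpart \<gamma> (\<psi>s m) x - Dpart \<gamma> (\<psi>s n) x) \<le> \<epsilon> * \<delta> / 4"
    using assms e dp unfolding UC_def by (meson divide_pos_pos mult_pos_pos zero_less_numeral)
  show "\<exists>N. \<forall>m\<ge>N. \<forall>n\<ge>N. \<forall>x. norm (Dpart (inc \<gamma> j) (\<psi>s m) x - Dpart (inc \<gamma> j) (\<psi>s n) x) \<le> \<epsilon>"
  proof (intro exI allI impI)
    fix m n x assume m: "m \<ge> N" and n: "n \<ge> N"
    define y where "y = x + \<delta> *\<^sub>R axis j (1::real)"
    define Fm where "Fm = Dpart \<gamma> (\<psi>s m)"
    define Fn where "Fn = Dpart \<gamma> (\<psi>s n)"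
    define Gm where "Gm = Dpart (inc \<gamma> j) (\<psi>s m)"
    define Gn where "Gn = Dpart (inc \<gamma> j) (\<psi>s n)"
    have Tm: "norm (Fm y - Fm x - \<delta> *\<^sub>R Gm x) \<le> (B * \<bar>\<delta>\<bar>) * \<bar>\<delta>\<bar>"
      unfolding Fm_def Gm_def y_def by (rule taylor_line[OF sm B])
    have Tn: "norm (Fn y - Fn x - \<delta> *\<^sub>R Gn x) \<le> (B * \<bar>\<delta>\<bar>) * \<bar>\<delta>\<bar>"
      unfolding Fn_def Gn_def y_def by (rule taylor_line[OF sm B])
    have eq: "\<delta> *\<^sub>R (Gm x - Gn x) = (Fm y - Fn y) - (Fm x - Fn x) - ((Fm y - Fm x - \<delta> *\<^sub>R Gm x) - (Fn y - Fn x - \<delta> *\<^sub>R Gn x))"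
      by (simp add: algebra_simps)
    have "\<delta> * norm (Gm x - Gn x) = norm (\<delta> *\<^sub>R (Gm x - Gn x))" using dp by simp
    also have "\<dots> \<le> norm (Fm y - Fn y) + norm (Fm x - Fn x) + (norm (Fm y - Fm x - \<delta> *\<^sub>R Gm x) + norm (Fn y - Fn x - \<delta> *\<^sub>R Gn x))"
      unfolding eq by (meson norm_triangle_ineq4 norm_triangle_le_diff add_mono order_trans)
    also have "\<dots> \<le> \<epsilon> * \<delta> / 4 + \<epsilon> * \<delta> / 4 + ((B * \<delta>) * \<delta> + (B * \<delta>) * \<delta>)"
    proof -
      have a1: "norm (Fm y - Fn y) \<le> \<epsilon> * \<delta> / 4" using N[OF m n, of y] unfolding Fm_def Fn_def .
      have a2: "norm (Fm x - Fn x) \<le> \<epsilon> * \<delta> / 4" using N[OF m n, of x] unfolding Fm_def Fn_def .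
      have t1: "norm (Fm y - Fm x - \<delta> *\<^sub>R Gm x) \<le> (B * \<delta>) * \<delta>" using Tm dp by simp
      have t2: "norm (Fn y - Fn x - \<delta> *\<^sub>R Gn x) \<le> (B * \<delta>) * \<delta>" using Tn dp by simp
      show ?thesis using a1 a2 t1 t2 by linarith
    qed
    also have "\<dots> = \<delta> * (\<epsilon> / 2 + 2 * B * \<delta>)" by (simp add: algebra_simps)
    also have "\<dots> \<le> \<delta> * \<epsilon>" using Bd dp by (intro mult_left_mono) auto
    finally show "norm (Dpart (inc \<gamma> j) (\<psi>s m) x - Dpart (inc \<gamma> j) (\<psi>s n) x) \<le> \<epsilon>"
      unfolding Gm_def Gn_def using dp by simp
  qed
qed

lemma UC_all: "UC \<gamma>"
proof -
  have "\<forall>\<gamma>. mi_abs \<gamma> = k \<longrightarrow> UC \<gamma>" for k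
  proof (induction k)
    case 0
    then show ?case
    proof (intro allI impI)
      fix \<gamma> :: "'n mindex" assume "mi_abs \<gamma> = 0"
      then have "\<gamma> = (\<lambda>_. 0)" unfolding mi_abs_def by (simp add: fun_eq_iff)
      then show "UC \<gamma>" using UC0 by simp
    qed
  next
    case (Suc k)
    show ?case
    proof (intro allI impI)
      fix \<gamma> :: "'n mindex" assume g: "mi_abs \<gamma> = Suc k"
      then obtain j where j: "\<gamma> j > 0" unfolding mi_abs_def
        by (metis gr0I sum.neutral nat.distinct(1))
      define \<gamma>' where "\<gamma>' = \<gamma>(j := \<gamma> j - 1)"
      have ig: "inc \<gamma>' j = \<gamma>" unfolding inc_def \<gamma>'_def using j by (auto simp: fun_eq_iff)
      then have "mi_abs \<gamma>' = k" using g mi_abs_inc[of \<gamma>' j] by simp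
      then have "UC \<gamma>'" using Suc.IH by blast
      then show "UC \<gamma>" using UC_step ig by metis
    qed
  qed
  then show ?thesis by blast
qed

definition Gl :: "'n mindex \<Rightarrow> real^'n \<Rightarrow> complex" where
  "Gl \<gamma> x = lim (\<lambda>n. Dpart \<gamma> (\<psi>s n) x)"

lemma Gl_lim: "(\<lambda>n. Dpart \<gamma> (\<psi>s n) x) \<longlonglongrightarrow> Gl \<gamma> x"
proof -
  have "Cauchy (\<lambda>n. Dpart \<gamma> (\<psi>s n) x)"
  proof (rule CauchyI)
    fix e :: real assume e: "e > 0"
    obtain N where "\<forall>m\<ge>N. \<forall>n\<ge>N. \<forall>x. norm (Dpart \<gamma> (\<psi>s m) x - Dpart \<gamma> (\<psi>s n) x) \<le> e/2"
      using UC_all[of \<gamma>] e unfolding UC_def by (meson half_gt_zero)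
    then show "\<exists>M. \<forall>m\<ge>M. \<forall>n\<ge>M. norm (Dpart \<gamma> (\<psi>s m) x - Dpart \<gamma> (\<psi>s n) x) < e"
    proof -
      have "e/2 < e" using e by simp
      then show ?thesis using \<open>\<forall>m\<ge>N. _\<close> by (meson le_less_trans)
    qed
  qed
  then show ?thesis unfolding Gl_def Cauchy_convergent_iff convergent_LIMSEQ_iff .
qed

lemma Gl_unif:
  assumes e: "e > 0"
  shows "\<exists>N. \<forall>n\<ge>N. \<forall>x. norm (Dpart \<gamma> (\<psi>s n) x - Gl \<gamma> x) \<le> e"
proof -
  obtain N where N: "\<And>m n x. m \<ge> N \<Longrightarrow> n \<ge> N \<Longrightarrow> norm (Dpart \<gamma> (\<psi>s m) x - Dpart \<gamma> (\<psi>s n) x) \<le> e"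
    using UC_all[of \<gamma>] e unfolding UC_def by meson
  show ?thesis
  proof (intro exI allI impI)
    fix n x assume n: "n \<ge> N"
    have "(\<lambda>m. norm (Dpart \<gamma> (\<psi>s n) x - Dpart \<gamma> (\<psi>s m) x)) \<longlonglongrightarrow> norm (Dpart \<gamma> (\<psi>s n) x - Gl \<gamma> x)"
      by (intro tendsto_intros Gl_lim)
    then show "norm (Dpart \<gamma> (\<psi>s n) x - Gl \<gamma> x) \<le> e"
      by (rule LIMSEQ_le_const2) (use N n in blast)
  qed
qed

lemma Gl_unif_ev:
  assumes e: "e > 0"
  shows "\<forall>\<^sub>F n in sequentially. \<forall>x. norm (Dpart \<gamma> (\<psi>s n) x - Gl \<gamma> x) \<le> e"
  using Gl_unif[OF e] unfolding eventually_sequentially by blast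

lemma Gl_deriv: "(Gl \<gamma> has_derivative (\<lambda>v. \<Sum>j\<in>UNIV. of_real (v$j) * Gl (inc \<gamma> j) x)) (at x)"
proof -
  have "\<exists>g. \<forall>x\<in>UNIV. (\<lambda>n. Dpart \<gamma> (\<psi>s n) x) \<longlonglongrightarrow> g x \<and>
      (g has_derivative (\<lambda>v. \<Sum>j\<in>UNIV. of_real (v$j) * Gl (inc \<gamma> j) x)) (at x within UNIV)"
  proof (rule has_derivative_sequence[OF convex_UNIV, where f'="\<lambda>n x v. \<Sum>j\<in>UNIV. of_real (v$j) * Dpart (inc \<gamma> j) (\<psi>s n) x"])
    show "\<And>n x. x \<in> UNIV \<Longrightarrow> (Dpart \<gamma> (\<psi>s n) has_derivative (\<lambda>v. \<Sum>j\<in>UNIV. of_real (v$j) * Dpart (inc \<gamma> j) (\<psi>s n) x)) (at x within UNIV)"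
      using Dpart_has_derivative[OF sm] by simp
    show "(0::real^'n) \<in> UNIV" by auto
    show "(\<lambda>n. Dpart \<gamma> (\<psi>s n) 0) \<longlonglongrightarrow> Gl \<gamma> 0" by (rule Gl_lim)
    fix e :: real assume e: "e > 0"
    define e' where "e' = e / real CARD('n)"
    have e': "e' > 0" unfolding e'_def using e by simp
    have "\<forall>\<^sub>F n in sequentially. \<forall>j. \<forall>x. norm (Dpart (inc \<gamma> j) (\<psi>s n) x - Gl (inc \<gamma> j) x) \<le> e'"
      by (intro eventually_all_finite allI Gl_unif_ev e')
    then show "\<forall>\<^sub>F n in sequentially. \<forall>x\<in>UNIV. \<forall>h. norm ((\<Sum>j\<in>UNIV. of_real (h$j) * Dpart (inc \<gamma> j) (\<psi>s n) x) - (\<Sum>j\<in>UNIV. of_real (h$j) * Gl (inc \<gamma> j) x)) \<le> e * norm h"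
    proof eventually_elim
      case (elim n)
      show ?case
      proof (intro ballI allI)
        fix x :: "real^'n" and h :: "real^'n"
        have "norm ((\<Sum>j\<in>UNIV. of_real (h$j) * Dpart (inc \<gamma> j) (\<psi>s n) x) - (\<Sum>j\<in>UNIV. of_real (h$j) * Gl (inc \<gamma> j) x))
            = norm (\<Sum>j\<in>UNIV. of_real (h$j) * (Dpart (inc \<gamma> j) (\<psi>s n) x - Gl (inc \<gamma> j) x))"
          by (simp add: sum_subtractf[symmetric] algebra_simps)
        also have "\<dots> \<le> (\<Sum>j\<in>UNIV. norm (of_real (h$j) * (Dpart (inc \<gamma> j) (\<psi>s n) x - Gl (inc \<gamma> j) x)))"
          by (rule norm_sum)
        also have "\<dots> \<le> (\<Sum>j\<in>(UNIV::'n set). norm h * e')"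
        proof (rule sum_mono)
          fix j
          have "norm (of_real (h$j) * (Dpart (inc \<gamma> j) (\<psi>s n) x - Gl (inc \<gamma> j) x)) = \<bar>h$j\<bar> * norm (Dpart (inc \<gamma> j) (\<psi>s n) x - Gl (inc \<gamma> j) x)"
            by (simp add: norm_mult)
          also have "\<dots> \<le> norm h * e'" using elim component_le_norm_cart[of h j] by (intro mult_mono) auto
          finally show "norm (of_real (h$j) * (Dpart (inc \<gamma> j) (\<psi>s n) x - Gl (inc \<gamma> j) x)) \<le> norm h * e'" .
        qed
        also have "\<dots> = e * norm h" unfolding e'_def by simp
        finally show "norm ((\<Sum>j\<in>UNIV. of_real (h$j) * Dpart (inc \<gamma> j) (\<psi>s n) x) - (\<Sum>j\<in>UNIV. of_real (h$j) * Gl (inc \<gamma> j) x)) \<le> e * norm h" .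
      qed
    qed
  qed
  then obtain g where g: "\<And>x. (\<lambda>n. Dpart \<gamma> (\<psi>s n) x) \<longlonglongrightarrow> g x"
     "\<And>x. (g has_derivative (\<lambda>v. \<Sum>j\<in>UNIV. of_real (v$j) * Gl (inc \<gamma> j) x)) (at x)" by auto
  have "g = Gl \<gamma>" using LIMSEQ_unique[OF g(1) Gl_lim] by (intro ext) simp
  then show ?thesis using g(2) by simp
qed

lemma Gl_pder: "pder j (Gl \<gamma>) = Gl (inc \<gamma> j)"
  by (intro ext) (simp add: pder_has_derivative[OF Gl_deriv] sum_axis)

definition \<phi> :: "real^'n \<Rightarrow> complex" where "\<phi> = Gl (\<lambda>_. 0)"

lemma Dpart_phi: "Dpart \<beta> \<phi> = Gl \<beta>"
  unfolding \<phi>_def using Dpart_family[of Gl \<beta> "\<lambda>_. 0", OF Gl_pder] by simp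

lemma phi_smooth: "smooth_fun \<phi>"
  unfolding smooth_fun_def Dpart_phi differentiable_def using Gl_deriv by blast

lemma phi_bound: "GS_term s t h0 \<phi> x \<alpha> \<beta> \<le> M"
proof -
  have "(\<lambda>n. GS_term s t h0 (\<psi>s n) x \<alpha> \<beta>) \<longlonglongrightarrow> GS_term s t h0 \<phi> x \<alpha> \<beta>"
    unfolding GS_term_wt Dpart_phi by (intro tendsto_intros Gl_lim)
  then show ?thesis by (rule LIMSEQ_le_const2) (use HB in blast)
qed

lemma phi_GS: "\<phi> \<in> GS s t"
  by (rule GS_I[OF phi_smooth h0]) (use phi_bound in \<open>auto simp: GS_finite_def\<close>)

end

lemma GS_term_half: "GS_term s t (h/2) f x \<alpha> \<beta> = (1/2)^(mi_abs \<alpha> + mi_abs \<beta>) * GS_term s t h f x \<alpha> \<beta>"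
proof -
  have "(h/2)^(mi_abs \<alpha> + mi_abs \<beta>) = (1/2)^(mi_abs \<alpha> + mi_abs \<beta>) * h^(mi_abs \<alpha> + mi_abs \<beta>)"
    by (simp add: power_divide)
  then show ?thesis unfolding GS_term_wt wt_def by simp
qed

lemma mi_le_abs: "\<alpha> i \<le> mi_abs \<alpha>"
  unfolding mi_abs_def by (rule member_le_sum) auto

context GSset begin

definition \<theta>n :: "nat \<Rightarrow> real^'n \<Rightarrow> complex" where "\<theta>n n = (\<lambda>x. \<psi>s n x - \<phi> x)"

lemma D\<theta>: "Dpart \<beta> (\<theta>n n) x = Dpart \<beta> (\<psi>s n) x - Gl \<beta> x"
  unfolding \<theta>n_def Dpart_diff(1)[OF sm phi_smooth] Dpart_phi ..

lemma \<theta>_GS: "\<theta>n n \<in> GS s t"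
  unfolding \<theta>n_def by (rule GS_diff[OF \<psi> phi_GS])

lemma \<theta>_2M: "GS_term s t h0 (\<theta>n n) x \<alpha> \<beta> \<le> 2 * M"
proof -
  have "GS_term s t h0 (\<theta>n n) x \<alpha> \<beta> \<le> GS_term s t h0 (\<psi>s n) x \<alpha> \<beta> + GS_term s t h0 \<phi> x \<alpha> \<beta>"
    unfolding \<theta>n_def using h0 by (intro GS_term_diff[OF sm phi_smooth]) simp
  then show ?thesis using HB[of n x \<alpha> \<beta>] phi_bound[of x \<alpha> \<beta>] by simp
qed

lemma PAIR:
  assumes e: "\<epsilon> > 0"
  shows "\<forall>\<^sub>F n in sequentially. \<forall>x. GS_term s t (h0/2) (\<theta>n n) x \<alpha> \<beta> \<le> \<epsilon>"
proof -
  define w1 where "w1 = wt s t (h0/2) \<alpha> \<beta>"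
  have w1: "w1 > 0" unfolding w1_def using h0 by (intro wt_pos) simp
  define Q where "Q i = 2 * M / wt s t h0 (\<alpha>(i := \<alpha> i + 2)) \<beta>" for i
  have Qnn: "Q i \<ge> 0" for i unfolding Q_def using M_nn wt_pos[OF h0, of s t "\<alpha>(i := \<alpha> i + 2)" \<beta>] by simp
  have dec: "(\<bar>mi_pow x \<alpha>\<bar> * norm (Dpart \<beta> (\<theta>n n) x)) * (x$i)^2 \<le> Q i" for x i n
  proof -
    have "\<bar>mi_pow x (\<alpha>(i := \<alpha> i + 2))\<bar> * norm (Dpart \<beta> (\<theta>n n) x) \<le> Q i"
      unfolding Q_def by (rule GS_term_bound[OF \<theta>_2M h0])
    then show ?thesis unfolding mi_pow_upd2 by (simp add: abs_mult algebra_simps)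
  qed
  define Qs where "Qs = (\<Sum>i\<in>UNIV. Q i)"
  have QQ: "Q i \<le> Qs" for i unfolding Qs_def by (rule member_le_sum) (auto intro: Qnn)
  define R where "R = max 1 (w1 * Qs / \<epsilon>)"
  have R1: "R \<ge> 1" unfolding R_def by simp
  define a where "a = mi_abs \<alpha>"
  have Ra: "R ^ a > 0" using R1 by simp
  have "\<forall>\<^sub>F n in sequentially. \<forall>x. norm (Dpart \<beta> (\<psi>s n) x - Gl \<beta> x) \<le> \<epsilon> / (w1 * R ^ a)"
    by (rule Gl_unif_ev) (use e w1 Ra in simp)
  then show ?thesis
  proof eventually_elim
    case (elim n)
    show ?case
    proof
      fix x
      define P where "P = \<bar>mi_pow x \<alpha>\<bar> * norm (Dpart \<beta> (\<theta>n n) x)"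
      have Pnn: "P \<ge> 0" unfolding P_def by simp
      have GT: "GS_term s t (h0/2) (\<theta>n n) x \<alpha> \<beta> = w1 * P" unfolding GS_term_wt w1_def P_def ..
      show "GS_term s t (h0/2) (\<theta>n n) x \<alpha> \<beta> \<le> \<epsilon>"
      proof (cases "\<exists>i. \<bar>x$i\<bar> \<ge> R")
        case True
        then obtain i where xi: "\<bar>x$i\<bar> \<ge> R" by blast
        have b: "R * R \<le> \<bar>x$i\<bar> * \<bar>x$i\<bar>" using xi R1 by (intro mult_mono) auto
        have a1: "R * 1 \<le> R * R" using R1 by (intro mult_left_mono) auto
        have c: "(x$i)^2 = \<bar>x$i\<bar> * \<bar>x$i\<bar>" by (metis power2_abs power2_eq_square)
        have sq: "(x$i)^2 \<ge> R" using a1 b c by linarith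
        have X2: "(x$i)^2 > 0" using sq R1 by linarith
        have "w1 * Qs / \<epsilon> \<le> (x$i)^2" using sq unfolding R_def by simp
        then have wq: "w1 * Qs \<le> \<epsilon> * (x$i)^2" using e by (simp add: field_simps)
        have "P * (x$i)^2 \<le> Qs" using dec[of x n i] QQ[of i] unfolding P_def by linarith
        then have "(w1 * P) * (x$i)^2 \<le> w1 * Qs" using w1 by (simp add: mult.assoc mult_left_mono)
        also have "\<dots> \<le> \<epsilon> * (x$i)^2" by (rule wq)
        finally have "(w1 * P) * (x$i)^2 \<le> \<epsilon> * (x$i)^2" .
        then have "w1 * P \<le> \<epsilon>" using X2 by simp
        then show ?thesis unfolding GT .
      next
        case False
        then have box: "\<And>i. \<bar>x$i\<bar> \<le> R" by (simp add: not_le less_imp_le)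
        have p: "\<bar>mi_pow x \<alpha>\<bar> \<le> R ^ a" unfolding a_def by (rule mi_pow_box[OF box])
        have nd: "norm (Dpart \<beta> (\<theta>n n) x) \<le> \<epsilon> / (w1 * R ^ a)" unfolding D\<theta> using elim by blast
        have "P \<le> R ^ a * (\<epsilon> / (w1 * R ^ a))" unfolding P_def by (intro mult_mono p nd) (use Ra in auto)
        then have "w1 * P \<le> w1 * (R ^ a * (\<epsilon> / (w1 * R ^ a)))" using w1 by (simp add: mult_left_mono)
        also have "\<dots> = \<epsilon>" using w1 Ra R1 by (simp add: field_simps)
        finally show ?thesis unfolding GT .
      qed
    qed
  qed
qed

lemma KEY:
  assumes e: "\<epsilon> > 0"
  shows "\<forall>\<^sub>F n in sequentially. \<forall>x \<alpha> \<beta>. GS_term s t (h0/2) (\<theta>n n) x \<alpha> \<beta> \<le> \<epsilon>"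
proof -
  obtain m0 where m0: "(1/2::real)^m0 < \<epsilon> / (2 * M + 1)"
    using real_arch_pow_inv[of "\<epsilon> / (2 * M + 1)" "1/2"] e M_nn by auto
  have m0': "(1/2::real)^m0 * (2 * M) \<le> \<epsilon>"
  proof -
    have "(1/2::real)^m0 * (2 * M + 1) < \<epsilon>" using m0 M_nn by (simp add: field_simps)
    moreover have "(1/2::real)^m0 * (2 * M) \<le> (1/2::real)^m0 * (2 * M + 1)" by (intro mult_left_mono) auto
    ultimately show ?thesis by linarith
  qed
  define Fin where "Fin = (Pi UNIV (\<lambda>_::'n. {..m0})) \<times> (Pi UNIV (\<lambda>_::'n. {..m0}))"
  have fin: "finite Fin" unfolding Fin_def PiE_UNIV_domain[symmetric]
    by (intro finite_cartesian_product finite_PiE) auto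
  have "\<forall>\<^sub>F n in sequentially. \<forall>p\<in>Fin. \<forall>x. GS_term s t (h0/2) (\<theta>n n) x (fst p) (snd p) \<le> \<epsilon>"
    by (intro eventually_ball_finite fin ballI PAIR e)
  then show ?thesis
  proof eventually_elim
    case (elim n)
    show ?case
    proof (intro allI)
      fix x \<alpha> \<beta>
      show "GS_term s t (h0/2) (\<theta>n n) x \<alpha> \<beta> \<le> \<epsilon>"
      proof (cases "mi_abs \<alpha> + mi_abs \<beta> \<ge> m0")
        case True
        have "GS_term s t (h0/2) (\<theta>n n) x \<alpha> \<beta> = (1/2)^(mi_abs \<alpha> + mi_abs \<beta>) * GS_term s t h0 (\<theta>n n) x \<alpha> \<beta>"
          by (rule GS_term_half)
        also have "\<dots> \<le> (1/2)^m0 * (2 * M)"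
          using True \<theta>_2M[of n x \<alpha> \<beta>] GS_term_nonneg[of h0] h0
          by (intro mult_mono power_decreasing) auto
        also have "\<dots> \<le> \<epsilon>" by (rule m0')
        finally show ?thesis .
      next
        case False
        have "\<alpha> i \<le> m0" "\<beta> i \<le> m0" for i using False mi_le_abs[of \<alpha> i] mi_le_abs[of \<beta> i] by linarith+
        then have "(\<alpha>, \<beta>) \<in> Fin" unfolding Fin_def by auto
        then show ?thesis using elim by fastforce
      qed
    qed
  qed
qed

lemma converges: "GS_converges s t \<psi>s"
  unfolding GS_converges_def
proof (intro bexI[OF _ phi_GS] allI impI)
  fix q :: "(real^'n \<Rightarrow> complex) \<Rightarrow> real" assume q: "GS_cont_seminorm s t q"
  have hp: "h0/2 > 0" using h0 by simp
  obtain C where C: "\<And>\<theta>. \<theta> \<in> GS s t \<Longrightarrow> GS_finite s t (h0/2) \<theta> \<Longrightarrow> q \<theta> \<le> C * GS_norm s t (h0/2) \<theta>"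
    using q hp unfolding GS_cont_seminorm_def by meson
  have qnn: "\<And>\<theta>. \<theta> \<in> GS s t \<Longrightarrow> 0 \<le> q \<theta>" using q unfolding GS_cont_seminorm_def by blast
  show "(\<lambda>n. q (\<lambda>x. \<psi>s n x - \<phi> x)) \<longlonglongrightarrow> 0"
    unfolding LIMSEQ_iff
  proof (intro allI impI)
    fix r :: real assume r: "r > 0"
    define \<epsilon> where "\<epsilon> = r / (2 * (\<bar>C\<bar> + 1))"
    have e: "\<epsilon> > 0" unfolding \<epsilon>_def using r by simp
    have Ce: "\<bar>C\<bar> * \<epsilon> < r"
    proof -
      have c1: "\<bar>C\<bar> + 1 > 0" by simp
      have "\<bar>C\<bar> * \<epsilon> \<le> (\<bar>C\<bar> + 1) * \<epsilon>" using e by (intro mult_right_mono) auto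
      also have "\<dots> = r / 2" unfolding \<epsilon>_def using c1 by (simp add: field_simps)
      finally show ?thesis using r by linarith
    qed
    obtain N where N: "\<And>n x \<alpha> \<beta>. n \<ge> N \<Longrightarrow> GS_term s t (h0/2) (\<theta>n n) x \<alpha> \<beta> \<le> \<epsilon>"
      using KEY[OF e] unfolding eventually_sequentially by blast
    show "\<exists>no. \<forall>n\<ge>no. norm (q (\<lambda>x. \<psi>s n x - \<phi> x) - 0) < r"
    proof (intro exI allI impI)
      fix n assume n: "n \<ge> N"
      have fin: "GS_finite s t (h0/2) (\<theta>n n)" unfolding GS_finite_def using N[OF n] by blast
      have nle: "GS_norm s t (h0/2) (\<theta>n n) \<le> \<epsilon>" by (rule GS_norm_le) (rule N[OF n])
      have nnn: "GS_norm s t (h0/2) (\<theta>n n) \<ge> 0"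
        using GS_term_le_norm[OF fin] GS_term_nonneg[of "h0/2"] hp by (meson less_imp_le order_trans)
      have "q (\<theta>n n) \<le> C * GS_norm s t (h0/2) (\<theta>n n)" by (rule C[OF \<theta>_GS fin])
      also have "\<dots> \<le> \<bar>C\<bar> * GS_norm s t (h0/2) (\<theta>n n)" using nnn by (intro mult_right_mono) auto
      also have "\<dots> \<le> \<bar>C\<bar> * \<epsilon>" using nle by (intro mult_left_mono) auto
      finally have "q (\<theta>n n) < r" using Ce by linarith
      moreover have "q (\<theta>n n) \<ge> 0" by (rule qnn[OF \<theta>_GS])
      ultimately show "norm (q (\<lambda>x. \<psi>s n x - \<phi> x) - 0) < r" unfolding \<theta>n_def by simp
    qed
  qed
qed

end

theorem lemma4p2:
  fixes s t :: real and \<phi>s :: "nat \<Rightarrow> real^'n::finite \<Rightarrow> complex"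
  assumes "s \<ge> 0" and "t \<ge> 0" and "\<And>n. \<phi>s n \<in> GS s t"
  shows "GS_converges s t \<phi>s \<longleftrightarrow>
           (GS_bounded s t \<phi>s \<and> (\<forall>x. convergent (\<lambda>n. \<phi>s n x)))"
proof
  assume "GS_converges s t \<phi>s"
  then show "GS_bounded s t \<phi>s \<and> (\<forall>x. convergent (\<lambda>n. \<phi>s n x))" by (rule forward[OF assms(3)])
next
  assume a: "GS_bounded s t \<phi>s \<and> (\<forall>x. convergent (\<lambda>n. \<phi>s n x))"
  obtain h M where hM: "h > 0" "\<And>n x \<alpha> \<beta>. GS_term s t h (\<phi>s n) x \<alpha> \<beta> \<le> M"
    using regular[where \<psi>s=\<phi>s, OF assms(3)] a by blast
  interpret GSset s t \<phi>s h M
    using assms(3) hM a by unfold_locales auto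
  show "GS_converges s t \<phi>s" by (rule converges)
qed

end
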